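(* Let $P=\mathcal E-i\theta$, with $\theta\in su(N)$, be a rank-one Hermitian projector solving the Euler–Lagrange equations of the $\mathbb CP^{N-1}$ sigma model, and let $\Phi([\theta],\lambda)\in SU(N)$ solve the associated LSP $D_\alpha\Phi=u^\alpha\Phi$, $\alpha=1,2$, where $$u^1=\frac{-2}{1+\lambda}[\theta_1,\theta],\qquad u^2=\frac{-2}{1-\lambda}[\theta_2,\theta].$$ Let $\vec w_C=\big(f(x^1)\theta^j_1+g(x^2)\theta^j_2\big)\partial/\partial\theta^j$ be the generalized vector field associated with a conformal transformation. Then: (i) the $su(N)$-valued immersion function $F=\Phi^{-1}(fu^1+gu^2)\Phi$ has tangent vectors $D_\alpha F=\Phi^{-1}(\mathrm{pr}\,\vec w_Cu^\alpha)\Phi$, $\alpha=1,2$ (i.e. $F$ is the Fokas–Gel'fand immersion function associated with the conformal symmetry); (ii) the infinitesimal deformation $(u^1,u^2,\Phi)\mapsto(u^1,u^2,\Phi)+\epsilon\big(\mathrm{pr}\,\vec w_Cu^1,\ \mathrm{pr}\,\vec w_Cu^2,\ (fu^1+gu^2)\Phi\big)$, where $(fu^1+gu^2)\Phi=\Phi F$, is a symmetry of the Euler–Lagrange equations together with the LSP.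
   Context: $\mathcal E=\mathbb I/N$. Write $\theta=\theta^je_j$ in a basis $e_j$ of $su(N)$; $\theta_1,\theta_2,\theta_{12}$ etc. denote partial derivatives in $x^1,x^2$ and $D_\alpha$ total derivatives, $\lambda$ is the spectral parameter. $P=\mathcal E-i\theta$ being a rank-one Hermitian projector means $P^2=P=P^\dagger$, $\mathrm{rank}\,P=1$. The Euler–Lagrange equations are $[\theta_{12},\theta]=0$, which is equivalent to $D_2u^1-D_1u^2+[u^1,u^2]=0$, the compatibility condition of the LSP. Two settings are considered: Minkowski space, where $x^1=x+t$, $x^2=x-t$, $u^1,u^2\in su(N)$, and $f,g$ are real functions; or Euclidean space, where $x^1=\xi$, $x^2=\bar\xi$ are complex conjugate variables, $(u^1)^\dagger=-u^2$, and $g(x^2)=\overline{f(x^1)}$. The prolongation is $\mathrm{pr}\,\vec w_C=\sum_J D_J(f\theta^j_1+g\theta^j_2)\,\partial/\partial\theta^j_J$. The deformation $(u^1,u^2,\Phi)\mapsto(u^1,u^2,\Phi)+\epsilon(A_1,A_2,\Psi)$ is a symmetry of the E–L equations together with the LSP if $D_2A_1-D_1A_2+[A_1,u^2]+[u^1,A_2]=0$ on solutions, $\Phi^{-1}\Psi\in su(N)$, and $D_\alpha\Psi=u^\alpha\Psi+A_\alpha\Phi$. *)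

theory Defs
  imports "HOL-Analysis.Analysis" "HOL-Complex_Analysis.Complex_Analysis"
begin

type_synonym 'n cmat = "complex^'n^'n"

definition cscale :: "complex \<Rightarrow> 'n::finite cmat \<Rightarrow> 'n cmat" where
  "cscale c A = (\<chi> i j. c * A$i$j)"

definition cadj :: "'n::finite cmat \<Rightarrow> 'n cmat" where
  "cadj A = (\<chi> i j. cnj (A$j$i))"

definition comm :: "'n::finite cmat \<Rightarrow> 'n cmat \<Rightarrow> 'n cmat" where
  "comm A B = A ** B - B ** A"

definition in_su :: "'n::finite cmat \<Rightarrow> bool" where
  "in_su A \<longleftrightarrow> cadj A = - A \<and> trace A = 0"

definition in_SU :: "'n::finite cmat \<Rightarrow> bool" where
  "in_SU A \<longleftrightarrow> cadj A ** A = mat 1 \<and> det A = 1"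

definition rank_one_herm_proj :: "'n::finite cmat \<Rightarrow> bool" where
  "rank_one_herm_proj P \<longleftrightarrow> P ** P = P \<and> cadj P = P \<and> rank P = 1"

definition pdx :: "(real \<times> real \<Rightarrow> 'a::real_normed_vector) \<Rightarrow> real \<times> real \<Rightarrow> 'a" where
  "pdx h p = vector_derivative (\<lambda>s. h (s, snd p)) (at (fst p))"

definition pdy :: "(real \<times> real \<Rightarrow> 'a::real_normed_vector) \<Rightarrow> real \<times> real \<Rightarrow> 'a" where
  "pdy h p = vector_derivative (\<lambda>t. h (fst p, t)) (at (snd p))"

fun iter_pd :: "bool list \<Rightarrow> (real \<times> real \<Rightarrow> 'a::real_normed_vector) \<Rightarrow> real \<times> real \<Rightarrow> 'a" where
  "iter_pd [] h = h"
| "iter_pd (b # bs) h = (if b then pdy else pdx) (iter_pd bs h)"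

definition smooth2_on :: "(real \<times> real) set \<Rightarrow> (real \<times> real \<Rightarrow> 'a::real_normed_vector) \<Rightarrow> bool" where
  "smooth2_on U h \<longleftrightarrow> (\<forall>bs. continuous_on U (iter_pd bs h) \<and>
     (\<forall>p\<in>U. (\<lambda>s. iter_pd bs h (s, snd p)) differentiable (at (fst p)) \<and>
            (\<lambda>t. iter_pd bs h (fst p, t)) differentiable (at (snd p))))"

definition smooth1_on :: "real set \<Rightarrow> (real \<Rightarrow> real) \<Rightarrow> bool" where
  "smooth1_on S f \<longleftrightarrow> (\<forall>k. \<forall>x\<in>S. ((deriv ^^ k) f) differentiable (at x))"

text \<open>Minkowski: the plane coordinates are (x^1,x^2) = (x+t,x-t)
  themselves. Euclidean: the plane coordinates are (x,y) with x^1 = xi = x + i y,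
  x^2 = conj xi, and D_1, D_2 are the Wirtinger derivatives.\<close>
datatype setting = Minkowski | Euclidean

definition D1 :: "setting \<Rightarrow> (real \<times> real \<Rightarrow> 'n::finite cmat) \<Rightarrow> real \<times> real \<Rightarrow> 'n cmat" where
  "D1 s h p = (case s of Minkowski \<Rightarrow> pdx h p
     | Euclidean \<Rightarrow> cscale (1/2) (pdx h p - cscale \<i> (pdy h p)))"

definition D2 :: "setting \<Rightarrow> (real \<times> real \<Rightarrow> 'n::finite cmat) \<Rightarrow> real \<times> real \<Rightarrow> 'n cmat" where
  "D2 s h p = (case s of Minkowski \<Rightarrow> pdy h p
     | Euclidean \<Rightarrow> cscale (1/2) (pdx h p + cscale \<i> (pdy h p)))"

definition conformal_coeffs :: "setting \<Rightarrow> (real \<times> real) set \<Rightarrow> (real \<times> real \<Rightarrow> complex)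
    \<Rightarrow> (real \<times> real \<Rightarrow> complex) \<Rightarrow> bool" where
  "conformal_coeffs s U fF gG = (case s of
     Minkowski \<Rightarrow> (\<exists>f g :: real \<Rightarrow> real. smooth1_on (fst ` U) f \<and> smooth1_on (snd ` U) g \<and>
        (\<forall>p\<in>U. fF p = complex_of_real (f (fst p)) \<and> gG p = complex_of_real (g (snd p))))
   | Euclidean \<Rightarrow> (\<exists>f :: complex \<Rightarrow> complex. f holomorphic_on {z. (Re z, Im z) \<in> U} \<and>
        (\<forall>p\<in>U. fF p = f (Complex (fst p) (snd p)) \<and> gG p = cnj (f (Complex (fst p) (snd p))))))"

definition setting_reality :: "setting \<Rightarrow> 'n::finite cmat \<Rightarrow> 'n cmat \<Rightarrow> bool" where
  "setting_reality s U1 U2 = (case s of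
     Minkowski \<Rightarrow> in_su U1 \<and> in_su U2
   | Euclidean \<Rightarrow> cadj U1 = - U2)"

definition lax_u1 :: "setting \<Rightarrow> complex \<Rightarrow> (real \<times> real \<Rightarrow> 'n::finite cmat) \<Rightarrow> real \<times> real \<Rightarrow> 'n cmat" where
  "lax_u1 s lam \<theta> p = cscale (-2 / (1 + lam)) (comm (D1 s \<theta> p) (\<theta> p))"

definition lax_u2 :: "setting \<Rightarrow> complex \<Rightarrow> (real \<times> real \<Rightarrow> 'n::finite cmat) \<Rightarrow> real \<times> real \<Rightarrow> 'n cmat" where
  "lax_u2 s lam \<theta> p = cscale (-2 / (1 - lam)) (comm (D2 s \<theta> p) (\<theta> p))"

text \<open>Characteristic Q = f theta_1 + g theta_2 of the conformal vector field, and the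
  action of its prolongation on u^1, u^2 (u^alpha depends on theta and theta_alpha only,
  so pr w_C u^alpha = (du^alpha/dtheta) Q + (du^alpha/dtheta_alpha) D_alpha Q).\<close>
definition charQ :: "setting \<Rightarrow> (real \<times> real \<Rightarrow> complex) \<Rightarrow> (real \<times> real \<Rightarrow> complex)
    \<Rightarrow> (real \<times> real \<Rightarrow> 'n::finite cmat) \<Rightarrow> real \<times> real \<Rightarrow> 'n cmat" where
  "charQ s fF gG \<theta> p = cscale (fF p) (D1 s \<theta> p) + cscale (gG p) (D2 s \<theta> p)"

definition prw_u1 :: "setting \<Rightarrow> complex \<Rightarrow> (real \<times> real \<Rightarrow> complex) \<Rightarrow> (real \<times> real \<Rightarrow> complex)
    \<Rightarrow> (real \<times> real \<Rightarrow> 'n::finite cmat) \<Rightarrow> real \<times> real \<Rightarrow> 'n cmat" where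
  "prw_u1 s lam fF gG \<theta> p = cscale (-2 / (1 + lam))
     (comm (D1 s (charQ s fF gG \<theta>) p) (\<theta> p) + comm (D1 s \<theta> p) (charQ s fF gG \<theta> p))"

definition prw_u2 :: "setting \<Rightarrow> complex \<Rightarrow> (real \<times> real \<Rightarrow> complex) \<Rightarrow> (real \<times> real \<Rightarrow> complex)
    \<Rightarrow> (real \<times> real \<Rightarrow> 'n::finite cmat) \<Rightarrow> real \<times> real \<Rightarrow> 'n cmat" where
  "prw_u2 s lam fF gG \<theta> p = cscale (-2 / (1 - lam))
     (comm (D2 s (charQ s fF gG \<theta>) p) (\<theta> p) + comm (D2 s \<theta> p) (charQ s fF gG \<theta> p))"

definition LSP_symmetry :: "setting \<Rightarrow> (real \<times> real) set
    \<Rightarrow> (real \<times> real \<Rightarrow> 'n::finite cmat) \<Rightarrow> (real \<times> real \<Rightarrow> 'n cmat) \<Rightarrow> (real \<times> real \<Rightarrow> 'n cmat)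
    \<Rightarrow> (real \<times> real \<Rightarrow> 'n cmat) \<Rightarrow> (real \<times> real \<Rightarrow> 'n cmat) \<Rightarrow> (real \<times> real \<Rightarrow> 'n cmat) \<Rightarrow> bool" where
  "LSP_symmetry s U u1 u2 \<Phi> A1 A2 \<Psi> \<longleftrightarrow>
     (\<forall>p\<in>U. D2 s A1 p - D1 s A2 p + comm (A1 p) (u2 p) + comm (u1 p) (A2 p) = 0
        \<and> in_su (matrix_inv (\<Phi> p) ** \<Psi> p)
        \<and> D1 s \<Psi> p = u1 p ** \<Psi> p + A1 p ** \<Phi> p
        \<and> D2 s \<Psi> p = u2 p ** \<Psi> p + A2 p ** \<Phi> p)"

end

theory Submission
  imports Defs
begin



lemma cscale_add_right: "cscale c (A + B) = cscale c A + cscale c B"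
  by (simp add: cscale_def vec_eq_iff algebra_simps)
lemma cscale_diff_right: "cscale c (A - B) = cscale c A - cscale c B"
  by (simp add: cscale_def vec_eq_iff algebra_simps)
lemma cscale_minus_right: "cscale c (- A) = - cscale c A"
  by (simp add: cscale_def vec_eq_iff algebra_simps)
lemma cscale_add_left: "cscale (c + d) A = cscale c A + cscale d A"
  by (simp add: cscale_def vec_eq_iff algebra_simps)
lemma cscale_diff_left: "cscale (c - d) A = cscale c A - cscale d A"
  by (simp add: cscale_def vec_eq_iff algebra_simps)
lemma cscale_cscale: "cscale c (cscale d A) = cscale (c * d) A"
  by (simp add: cscale_def vec_eq_iff algebra_simps)
lemma cscale_one[simp]: "cscale 1 A = A"
  by (simp add: cscale_def vec_eq_iff)
lemma cscale_zero_left[simp]: "cscale 0 A = 0"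
  by (simp add: cscale_def vec_eq_iff)
lemma cscale_zero_right[simp]: "cscale c 0 = 0"
  by (simp add: cscale_def vec_eq_iff)
lemma cscale_mult_left: "cscale c A ** B = cscale c (A ** B)"
  by (simp add: cscale_def vec_eq_iff matrix_matrix_mult_def sum_distrib_left algebra_simps)
lemma cscale_mult_right: "A ** cscale c B = cscale c (A ** B)"
  by (simp add: cscale_def vec_eq_iff matrix_matrix_mult_def sum_distrib_left algebra_simps)

lemma matrix_add_rdistrib': "((B + C) ** A) = (B ** A) + (C ** A)" for A B C :: "'n::finite cmat"
  by (simp add: matrix_matrix_mult_def vec_eq_iff sum.distrib[symmetric] algebra_simps)
lemma matrix_diff_ldistrib: "(A ** (B - C)) = (A ** B) - (A ** C)" for A B C :: "'n::finite cmat"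
  by (simp add: matrix_matrix_mult_def vec_eq_iff sum_subtractf[symmetric] algebra_simps)
lemma matrix_diff_rdistrib: "((B - C) ** A) = (B ** A) - (C ** A)" for A B C :: "'n::finite cmat"
  by (simp add: matrix_matrix_mult_def vec_eq_iff sum_subtractf[symmetric] algebra_simps)
lemma matrix_neg_left: "(- B) ** A = - (B ** A)" for A B :: "'n::finite cmat"
  by (simp add: matrix_matrix_mult_def vec_eq_iff sum_negf[symmetric])
lemma matrix_neg_right: "A ** (- B) = - (A ** B)" for A B :: "'n::finite cmat"
  by (simp add: matrix_matrix_mult_def vec_eq_iff sum_negf[symmetric])

lemma cR: "r *\<^sub>R (z::complex) = complex_of_real r * z"
  by (simp add: scaleR_conv_of_real)

lemma bilinear_mult: "bilinear (\<lambda>A B :: 'n::finite cmat. A ** B)"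
  unfolding bilinear_def linear_iff
  by (simp add: matrix_matrix_mult_def vec_eq_iff sum.distrib[symmetric] algebra_simps cR sum_distrib_left)

lemma bb_mult: "bounded_bilinear (\<lambda>A B :: 'n::finite cmat. A ** B)"
  using bilinear_mult bilinear_conv_bounded_bilinear by blast

lemma bb_cscale: "bounded_bilinear (cscale :: complex \<Rightarrow> 'n::finite cmat \<Rightarrow> 'n cmat)"
  unfolding bilinear_conv_bounded_bilinear[symmetric] bilinear_def linear_iff
  by (simp add: cscale_def vec_eq_iff algebra_simps cR)

lemma bl_cscale: "bounded_linear (cscale c :: 'n::finite cmat \<Rightarrow> 'n cmat)"
  using bounded_bilinear.bounded_linear_right[OF bb_cscale] .

lemma bl_cadj: "bounded_linear (cadj :: 'n::finite cmat \<Rightarrow> 'n cmat)"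
  unfolding linear_conv_bounded_linear[symmetric] linear_iff
  by (simp add: cadj_def vec_eq_iff cR)




definition HX :: "(real \<times> real \<Rightarrow> 'a::real_normed_vector) \<Rightarrow> real \<times> real \<Rightarrow> 'a \<Rightarrow> bool" where
  "HX h p X \<longleftrightarrow> ((\<lambda>s. h (s, snd p)) has_vector_derivative X) (at (fst p))"
definition HY :: "(real \<times> real \<Rightarrow> 'a::real_normed_vector) \<Rightarrow> real \<times> real \<Rightarrow> 'a \<Rightarrow> bool" where
  "HY h p X \<longleftrightarrow> ((\<lambda>t. h (fst p, t)) has_vector_derivative X) (at (snd p))"
definition ldx :: "(real \<times> real \<Rightarrow> 'a::real_normed_vector) \<Rightarrow> real \<times> real \<Rightarrow> bool" where
  "ldx h p \<longleftrightarrow> (\<lambda>s. h (s, snd p)) differentiable (at (fst p))"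
definition ldy :: "(real \<times> real \<Rightarrow> 'a::real_normed_vector) \<Rightarrow> real \<times> real \<Rightarrow> bool" where
  "ldy h p \<longleftrightarrow> (\<lambda>t. h (fst p, t)) differentiable (at (snd p))"
definition LD :: "(real \<times> real \<Rightarrow> 'a::real_normed_vector) \<Rightarrow> real \<times> real \<Rightarrow> bool" where
  "LD h p \<longleftrightarrow> ldx h p \<and> ldy h p"

lemma HX_pdx: "HX h p X \<Longrightarrow> pdx h p = X"
  unfolding HX_def pdx_def by (rule vector_derivative_at)
lemma HY_pdy: "HY h p X \<Longrightarrow> pdy h p = X"
  unfolding HY_def pdy_def by (rule vector_derivative_at)
lemma ldx_HX: "ldx h p \<Longrightarrow> HX h p (pdx h p)"
  unfolding ldx_def HX_def pdx_def by (simp add: vector_derivative_works[symmetric])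
lemma ldy_HY: "ldy h p \<Longrightarrow> HY h p (pdy h p)"
  unfolding ldy_def HY_def pdy_def by (simp add: vector_derivative_works[symmetric])
lemma HX_ldx: "HX h p X \<Longrightarrow> ldx h p"
  unfolding ldx_def HX_def by (rule differentiableI_vector)
lemma HY_ldy: "HY h p X \<Longrightarrow> ldy h p"
  unfolding ldy_def HY_def by (rule differentiableI_vector)

lemma HX_lin: "bounded_linear L \<Longrightarrow> HX h p X \<Longrightarrow> HX (\<lambda>q. L (h q)) p (L X)"
  unfolding HX_def by (rule bounded_linear.has_vector_derivative)
lemma HY_lin: "bounded_linear L \<Longrightarrow> HY h p X \<Longrightarrow> HY (\<lambda>q. L (h q)) p (L X)"
  unfolding HY_def by (rule bounded_linear.has_vector_derivative)
lemma HX_bil: "bounded_bilinear B \<Longrightarrow> HX h p X \<Longrightarrow> HX k p Y \<Longrightarrow>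
   HX (\<lambda>q. B (h q) (k q)) p (B (h p) Y + B X (k p))"
  unfolding HX_def using bounded_bilinear.has_vector_derivative[of B "\<lambda>s. h (s, snd p)" X "fst p" UNIV "\<lambda>s. k (s, snd p)" Y] by simp
lemma HY_bil: "bounded_bilinear B \<Longrightarrow> HY h p X \<Longrightarrow> HY k p Y \<Longrightarrow>
   HY (\<lambda>q. B (h q) (k q)) p (B (h p) Y + B X (k p))"
  unfolding HY_def using bounded_bilinear.has_vector_derivative[of B "\<lambda>t. h (fst p, t)" X "snd p" UNIV "\<lambda>t. k (fst p, t)" Y] by simp
lemma HX_add: "HX h p X \<Longrightarrow> HX k p Y \<Longrightarrow> HX (\<lambda>q. h q + k q) p (X + Y)"
  unfolding HX_def by (rule has_vector_derivative_add)
lemma HY_add: "HY h p X \<Longrightarrow> HY k p Y \<Longrightarrow> HY (\<lambda>q. h q + k q) p (X + Y)"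
  unfolding HY_def by (rule has_vector_derivative_add)
lemma HX_diff: "HX h p X \<Longrightarrow> HX k p Y \<Longrightarrow> HX (\<lambda>q. h q - k q) p (X - Y)"
  unfolding HX_def by (rule has_vector_derivative_diff)
lemma HY_diff: "HY h p X \<Longrightarrow> HY k p Y \<Longrightarrow> HY (\<lambda>q. h q - k q) p (X - Y)"
  unfolding HY_def by (rule has_vector_derivative_diff)
lemma HX_const: "HX (\<lambda>q. c) p 0"
  unfolding HX_def by simp
lemma HY_const: "HY (\<lambda>q. c) p 0"
  unfolding HY_def by simp

lemma open_slice_x: "open U \<Longrightarrow> open {s. (s, y) \<in> U}" for U :: "(real \<times> real) set"
proof -
  assume "open U"
  have "{s. (s, y) \<in> U} = (\<lambda>s. (s, y)) -` U" by auto
  moreover have "open ((\<lambda>s::real. (s, y)) -` U)"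
    by (rule open_vimage[OF \<open>open U\<close>]) (auto intro!: continuous_intros)
  ultimately show ?thesis by simp
qed
lemma open_slice_y: "open U \<Longrightarrow> open {t. (x, t) \<in> U}" for U :: "(real \<times> real) set"
proof -
  assume "open U"
  have "{t. (x, t) \<in> U} = (\<lambda>t. (x, t)) -` U" by auto
  moreover have "open ((\<lambda>t::real. (x, t)) -` U)"
    by (rule open_vimage[OF \<open>open U\<close>]) (auto intro!: continuous_intros)
  ultimately show ?thesis by simp
qed

lemma HX_local: "open U \<Longrightarrow> p \<in> U \<Longrightarrow> (\<And>q. q \<in> U \<Longrightarrow> h q = k q) \<Longrightarrow> HX h p X \<Longrightarrow> HX k p X"
  unfolding HX_def
proof -
  assume U: "open U" "p \<in> U" and eq: "\<And>q. q \<in> U \<Longrightarrow> h q = k q"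
    and d: "((\<lambda>s. h (s, snd p)) has_vector_derivative X) (at (fst p))"
  show "((\<lambda>s. k (s, snd p)) has_vector_derivative X) (at (fst p))"
    using has_vector_derivative_transform_within_open[OF d open_slice_x[OF U(1), of "snd p"]] U eq
    by auto
qed
lemma HY_local: "open U \<Longrightarrow> p \<in> U \<Longrightarrow> (\<And>q. q \<in> U \<Longrightarrow> h q = k q) \<Longrightarrow> HY h p X \<Longrightarrow> HY k p X"
  unfolding HY_def
proof -
  assume U: "open U" "p \<in> U" and eq: "\<And>q. q \<in> U \<Longrightarrow> h q = k q"
    and d: "((\<lambda>t. h (fst p, t)) has_vector_derivative X) (at (snd p))"
  show "((\<lambda>t. k (fst p, t)) has_vector_derivative X) (at (snd p))"
    using has_vector_derivative_transform_within_open[OF d open_slice_y[OF U(1), of "fst p"]] U eq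
    by auto
qed

lemma pdx_local: "open U \<Longrightarrow> p \<in> U \<Longrightarrow> (\<And>q. q \<in> U \<Longrightarrow> h q = k q) \<Longrightarrow> pdx h p = pdx k p"
  unfolding pdx_def
proof (rule vector_derivative_cong_eq[where A=UNIV])
  assume "open U" "p \<in> U" and eq: "\<And>q. q \<in> U \<Longrightarrow> h q = k q"
  show "\<forall>\<^sub>F x in nhds (fst p). x \<in> UNIV \<longrightarrow> h (x, snd p) = k (x, snd p)"
    unfolding eventually_nhds
    by (rule exI[where x="{s. (s, snd p) \<in> U}"]) (use \<open>open U\<close> \<open>p \<in> U\<close> eq in \<open>auto simp: open_slice_x\<close>)
qed auto
lemma pdy_local: "open U \<Longrightarrow> p \<in> U \<Longrightarrow> (\<And>q. q \<in> U \<Longrightarrow> h q = k q) \<Longrightarrow> pdy h p = pdy k p"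
  unfolding pdy_def
proof (rule vector_derivative_cong_eq[where A=UNIV])
  assume "open U" "p \<in> U" and eq: "\<And>q. q \<in> U \<Longrightarrow> h q = k q"
  show "\<forall>\<^sub>F x in nhds (snd p). x \<in> UNIV \<longrightarrow> h (fst p, x) = k (fst p, x)"
    unfolding eventually_nhds
    by (rule exI[where x="{t. (fst p, t) \<in> U}"]) (use \<open>open U\<close> \<open>p \<in> U\<close> eq in \<open>auto simp: open_slice_y\<close>)
qed auto

lemma LD_local: "open U \<Longrightarrow> p \<in> U \<Longrightarrow> (\<And>q. q \<in> U \<Longrightarrow> h q = k q) \<Longrightarrow> LD h p \<Longrightarrow> LD k p"
  unfolding LD_def using HX_ldx[OF HX_local] HY_ldy[OF HY_local] ldx_HX ldy_HY by metis




lemma clairaut: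
  fixes g gx gy gxy gyx :: "real \<times> real \<Rightarrow> real"
  assumes U: "open U" and p: "(a,b) \<in> U"
  and dx: "\<And>x y. (x,y) \<in> U \<Longrightarrow> ((\<lambda>s. g (s,y)) has_real_derivative gx (x,y)) (at x)"
  and dy: "\<And>x y. (x,y) \<in> U \<Longrightarrow> ((\<lambda>t. g (x,t)) has_real_derivative gy (x,y)) (at y)"
  and dxy: "\<And>x y. (x,y) \<in> U \<Longrightarrow> ((\<lambda>t. gx (x,t)) has_real_derivative gxy (x,y)) (at y)"
  and dyx: "\<And>x y. (x,y) \<in> U \<Longrightarrow> ((\<lambda>s. gy (s,y)) has_real_derivative gyx (x,y)) (at x)"
  and cxy: "isCont gxy (a,b)" and cyx: "isCont gyx (a,b)"
  shows "gxy (a,b) = gyx (a,b)"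
proof (rule ccontr)
  assume ne: "gxy (a,b) \<noteq> gyx (a,b)"
  define c where "c = \<bar>gxy (a,b) - gyx (a,b)\<bar>"
  have c: "c > 0" using ne by (simp add: c_def)
  obtain e where e: "e > 0" "ball (a,b) e \<subseteq> U" using U p open_contains_ball by blast
  obtain d1 where d1: "d1 > 0" "\<And>q. dist q (a,b) < d1 \<Longrightarrow> dist (gxy q) (gxy (a,b)) < c/2"
    using cxy c unfolding continuous_at_eps_delta by (metis half_gt_zero)
  obtain d2 where d2: "d2 > 0" "\<And>q. dist q (a,b) < d2 \<Longrightarrow> dist (gyx q) (gyx (a,b)) < c/2"
    using cyx c unfolding continuous_at_eps_delta by (metis half_gt_zero)
  define r where "r = min (min d1 d2) e / 4"
  have r: "r > 0" using d1 d2 e by (simp add: r_def)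
  have near: "dist (x,y) (a,b) < min (min d1 d2) e" if "\<bar>x - a\<bar> \<le> r" "\<bar>y - b\<bar> \<le> r" for x y
  proof -
    have "dist (x,y) (a,b) = sqrt ((x-a)^2 + (y-b)^2)"
      by (simp add: dist_Pair_Pair dist_real_def)
    also have "\<dots> \<le> \<bar>x-a\<bar> + \<bar>y-b\<bar>" by (rule sqrt_sum_squares_le_sum_abs)
    also have "\<dots> \<le> 2*r" using that by simp
    also have "\<dots> < min (min d1 d2) e" using r unfolding r_def by linarith
    finally show ?thesis .
  qed
  have inU: "(x,y) \<in> U" if "\<bar>x - a\<bar> \<le> r" "\<bar>y - b\<bar> \<le> r" for x y
    using near[OF that] e by (auto simp: dist_commute subset_eq)
  define D where "D = g (a+r,b+r) - g (a+r,b) - g (a,b+r) + g (a,b)"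
  obtain \<xi> where \<xi>: "a < \<xi>" "\<xi> < a + r"
    "(g (a+r,b+r) - g (a+r,b)) - (g (a,b+r) - g (a,b)) = ((a+r) - a) * (gx (\<xi>,b+r) - gx (\<xi>,b))"
  proof -
    have "\<And>x. a \<le> x \<Longrightarrow> x \<le> a + r \<Longrightarrow> ((\<lambda>x. g (x, b + r) - g (x, b)) has_real_derivative
               gx (x, b + r) - gx (x, b)) (at x)"
      using r by (auto intro!: DERIV_diff dx inU)
    then show ?thesis using that MVT2[of a "a+r" "\<lambda>x. g (x,b+r) - g (x,b)" "\<lambda>x. gx (x,b+r) - gx (x,b)"] r
      by auto
  qed
  obtain \<eta> where \<eta>: "b < \<eta>" "\<eta> < b + r"
    "gx (\<xi>,b+r) - gx (\<xi>,b) = ((b+r) - b) * gxy (\<xi>,\<eta>)"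
  proof -
    have "\<And>y. b \<le> y \<Longrightarrow> y \<le> b + r \<Longrightarrow> ((\<lambda>y. gx (\<xi>,y)) has_real_derivative gxy (\<xi>,y)) (at y)"
      using r \<xi> by (auto intro!: dxy inU)
    then show ?thesis using that MVT2[of b "b+r" "\<lambda>y. gx (\<xi>,y)" "\<lambda>y. gxy (\<xi>,y)"] r
      by auto
  qed
  obtain \<eta>' where \<eta>': "b < \<eta>'" "\<eta>' < b + r"
    "(g (a+r,b+r) - g (a,b+r)) - (g (a+r,b) - g (a,b)) = ((b+r) - b) * (gy (a+r,\<eta>') - gy (a,\<eta>'))"
  proof -
    have "\<And>y. b \<le> y \<Longrightarrow> y \<le> b + r \<Longrightarrow> ((\<lambda>y. g (a+r,y) - g (a,y)) has_real_derivative gy (a+r,y) - gy (a,y)) (at y)"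
      using r by (auto intro!: DERIV_diff dy inU)
    then show ?thesis using that MVT2[of b "b+r" "\<lambda>y. g (a+r,y) - g (a,y)" "\<lambda>y. gy (a+r,y) - gy (a,y)"] r
      by auto
  qed
  obtain \<xi>' where \<xi>': "a < \<xi>'" "\<xi>' < a + r"
    "gy (a+r,\<eta>') - gy (a,\<eta>') = ((a+r) - a) * gyx (\<xi>',\<eta>')"
  proof -
    have "\<And>x. a \<le> x \<Longrightarrow> x \<le> a + r \<Longrightarrow> ((\<lambda>x. gy (x,\<eta>')) has_real_derivative gyx (x,\<eta>')) (at x)"
      using r \<eta>' by (auto intro!: dyx inU)
    then show ?thesis using that MVT2[of a "a+r" "\<lambda>x. gy (x,\<eta>')" "\<lambda>x. gyx (x,\<eta>')"] r
      by auto
  qed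
  have "r * (r * gxy (\<xi>,\<eta>)) = r * (r * gyx (\<xi>',\<eta>'))"
    using \<xi>(3) \<eta>(3) \<eta>'(3) \<xi>'(3) by (simp add: algebra_simps)
  hence eq: "gxy (\<xi>,\<eta>) = gyx (\<xi>',\<eta>')" using r by simp
  have "dist (\<xi>,\<eta>) (a,b) < d1" using near[of \<xi> \<eta>] \<xi> \<eta> by auto
  hence 1: "\<bar>gxy (\<xi>,\<eta>) - gxy (a,b)\<bar> < c/2" using d1 by (simp add: dist_real_def)
  have "dist (\<xi>',\<eta>') (a,b) < d2" using near[of \<xi>' \<eta>'] \<xi>' \<eta>' by auto
  hence 2: "\<bar>gyx (\<xi>',\<eta>') - gyx (a,b)\<bar> < c/2" using d2 by (simp add: dist_real_def)
  show False using 1 2 eq unfolding c_def by (simp add: abs_if split: if_splits)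
qed

lemma iter_pd_append: "iter_pd (bs @ [b]) h = iter_pd bs ((if b then pdy else pdx) h)"
  by (induction bs) auto

lemma smooth2_pdx: "smooth2_on U h \<Longrightarrow> smooth2_on U (pdx h)"
  unfolding smooth2_on_def using iter_pd_append[of _ False h] by metis
lemma smooth2_pdy: "smooth2_on U h \<Longrightarrow> smooth2_on U (pdy h)"
  unfolding smooth2_on_def using iter_pd_append[of _ True h] by metis
lemma smooth2_LD: "smooth2_on U h \<Longrightarrow> p \<in> U \<Longrightarrow> LD h p"
  unfolding smooth2_on_def LD_def ldx_def ldy_def by (metis iter_pd.simps(1))
lemma smooth2_cont: "smooth2_on U h \<Longrightarrow> continuous_on U h"
  unfolding smooth2_on_def by (metis iter_pd.simps(1))

lemma schwarz_pd:
  fixes h :: "real \<times> real \<Rightarrow> 'a::euclidean_space"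
  assumes U: "open U" and s: "smooth2_on U h" and p: "p \<in> U"
  shows "pdy (pdx h) p = pdx (pdy h) p"
proof (rule euclidean_eqI)
  fix i :: 'a assume i: "i \<in> Basis"
  have bl: "bounded_linear (\<lambda>v::'a. v \<bullet> i)" by (rule bounded_linear_inner_left)
  have sx: "smooth2_on U (pdx h)" "smooth2_on U (pdy h)" using s smooth2_pdx smooth2_pdy by auto
  have c1: "continuous_on U (pdy (pdx h))" using smooth2_cont[OF smooth2_pdy[OF sx(1)]] .
  have c2: "continuous_on U (pdx (pdy h))" using smooth2_cont[OF smooth2_pdx[OF sx(2)]] .
  have hx: "\<And>k q. smooth2_on U k \<Longrightarrow> q \<in> U \<Longrightarrow> ((\<lambda>s. k (s, snd q) \<bullet> i) has_real_derivative (pdx k q \<bullet> i)) (at (fst q))"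
    unfolding has_real_derivative_iff_has_vector_derivative
    using HX_lin[OF bl ldx_HX] smooth2_LD unfolding HX_def LD_def by blast
  have hy: "\<And>k q. smooth2_on U k \<Longrightarrow> q \<in> U \<Longrightarrow> ((\<lambda>t. k (fst q, t) \<bullet> i) has_real_derivative (pdy k q \<bullet> i)) (at (snd q))"
    unfolding has_real_derivative_iff_has_vector_derivative
    using HY_lin[OF bl ldy_HY] smooth2_LD unfolding HY_def LD_def by blast
  have "(\<lambda>q. pdy (pdx h) q \<bullet> i) (fst p, snd p) = (\<lambda>q. pdx (pdy h) q \<bullet> i) (fst p, snd p)"
  proof (rule clairaut[where U=U and g="\<lambda>q. h q \<bullet> i" and gx="\<lambda>q. pdx h q \<bullet> i" and gy="\<lambda>q. pdy h q \<bullet> i"])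
    show "open U" by fact
    show "(fst p, snd p) \<in> U" using p by simp
    show "((\<lambda>s. h (s, y) \<bullet> i) has_real_derivative pdx h (x, y) \<bullet> i) (at x)" if "(x,y) \<in> U" for x y
      using hx[OF s that] by simp
    show "((\<lambda>t. h (x, t) \<bullet> i) has_real_derivative pdy h (x, y) \<bullet> i) (at y)" if "(x,y) \<in> U" for x y
      using hy[OF s that] by simp
    show "((\<lambda>t. pdx h (x, t) \<bullet> i) has_real_derivative pdy (pdx h) (x, y) \<bullet> i) (at y)" if "(x,y) \<in> U" for x y
      using hy[OF sx(1) that] by simp
    show "((\<lambda>s. pdy h (s, y) \<bullet> i) has_real_derivative pdx (pdy h) (x, y) \<bullet> i) (at x)" if "(x,y) \<in> U" for x y
      using hx[OF sx(2) that] by simp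
    show "isCont (\<lambda>q. pdy (pdx h) q \<bullet> i) (fst p, snd p)"
      using c1 U p by (auto intro!: continuous_intros simp: continuous_on_eq_continuous_at)
    show "isCont (\<lambda>q. pdx (pdy h) q \<bullet> i) (fst p, snd p)"
      using c2 U p by (auto intro!: continuous_intros simp: continuous_on_eq_continuous_at)
  qed
  thus "pdy (pdx h) p \<bullet> i = pdx (pdy h) p \<bullet> i" by simp
qed




lemma ldx_local: "open U \<Longrightarrow> p \<in> U \<Longrightarrow> (\<And>q. q \<in> U \<Longrightarrow> h q = k q) \<Longrightarrow> ldx h p \<Longrightarrow> ldx k p"
  using HX_ldx[OF HX_local[OF _ _ _ ldx_HX]] by blast
lemma ldy_local: "open U \<Longrightarrow> p \<in> U \<Longrightarrow> (\<And>q. q \<in> U \<Longrightarrow> h q = k q) \<Longrightarrow> ldy h p \<Longrightarrow> ldy k p"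
  using HY_ldy[OF HY_local[OF _ _ _ ldy_HY]] by blast

lemma pdx_bil: "bounded_bilinear B \<Longrightarrow> ldx a p \<Longrightarrow> ldx b p \<Longrightarrow>
   pdx (\<lambda>q. B (a q) (b q)) p = B (pdx a p) (b p) + B (a p) (pdx b p) \<and> ldx (\<lambda>q. B (a q) (b q)) p"
proof -
  assume "bounded_bilinear B" "ldx a p" "ldx b p"
  then have H: "HX (\<lambda>q. B (a q) (b q)) p (B (a p) (pdx b p) + B (pdx a p) (b p))"
    by (intro HX_bil ldx_HX)
  show ?thesis using HX_pdx[OF H] HX_ldx[OF H] by (simp add: add.commute)
qed
lemma pdy_bil: "bounded_bilinear B \<Longrightarrow> ldy a p \<Longrightarrow> ldy b p \<Longrightarrow>
   pdy (\<lambda>q. B (a q) (b q)) p = B (pdy a p) (b p) + B (a p) (pdy b p) \<and> ldy (\<lambda>q. B (a q) (b q)) p"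
proof -
  assume "bounded_bilinear B" "ldy a p" "ldy b p"
  then have H: "HY (\<lambda>q. B (a q) (b q)) p (B (a p) (pdy b p) + B (pdy a p) (b p))"
    by (intro HY_bil ldy_HY)
  show ?thesis using HY_pdy[OF H] HY_ldy[OF H] by (simp add: add.commute)
qed
lemma pdx_lin: "bounded_linear L \<Longrightarrow> ldx a p \<Longrightarrow>
   pdx (\<lambda>q. L (a q)) p = L (pdx a p) \<and> ldx (\<lambda>q. L (a q)) p"
  using HX_lin[OF _ ldx_HX] HX_pdx HX_ldx by blast
lemma pdy_lin: "bounded_linear L \<Longrightarrow> ldy a p \<Longrightarrow>
   pdy (\<lambda>q. L (a q)) p = L (pdy a p) \<and> ldy (\<lambda>q. L (a q)) p"
  using HY_lin[OF _ ldy_HY] HY_pdy HY_ldy by blast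
lemma pdx_add: "ldx a p \<Longrightarrow> ldx b p \<Longrightarrow>
   pdx (\<lambda>q. a q + b q) p = pdx a p + pdx b p \<and> ldx (\<lambda>q. a q + b q) p"
  using HX_add[OF ldx_HX ldx_HX] HX_pdx HX_ldx by blast
lemma pdy_add: "ldy a p \<Longrightarrow> ldy b p \<Longrightarrow>
   pdy (\<lambda>q. a q + b q) p = pdy a p + pdy b p \<and> ldy (\<lambda>q. a q + b q) p"
  using HY_add[OF ldy_HY ldy_HY] HY_pdy HY_ldy by blast
lemma pdx_diff: "ldx a p \<Longrightarrow> ldx b p \<Longrightarrow>
   pdx (\<lambda>q. a q - b q) p = pdx a p - pdx b p \<and> ldx (\<lambda>q. a q - b q) p"
  using HX_diff[OF ldx_HX ldx_HX] HX_pdx HX_ldx by blast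
lemma pdy_diff: "ldy a p \<Longrightarrow> ldy b p \<Longrightarrow>
   pdy (\<lambda>q. a q - b q) p = pdy a p - pdy b p \<and> ldy (\<lambda>q. a q - b q) p"
  using HY_diff[OF ldy_HY ldy_HY] HY_pdy HY_ldy by blast
lemma pdx_const: "pdx (\<lambda>q. c) p = 0 \<and> ldx (\<lambda>q. c) p"
  using HX_const HX_pdx HX_ldx by blast
lemma pdy_const: "pdy (\<lambda>q. c) p = 0 \<and> ldy (\<lambda>q. c) p"
  using HY_const HY_pdy HY_ldy by blast

definition dc1 :: "setting \<Rightarrow> (real \<times> real \<Rightarrow> complex) \<Rightarrow> real \<times> real \<Rightarrow> complex" where
  "dc1 s k p = (case s of Minkowski \<Rightarrow> pdx k p | Euclidean \<Rightarrow> (1/2) * (pdx k p - \<i> * pdy k p))"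
definition dc2 :: "setting \<Rightarrow> (real \<times> real \<Rightarrow> complex) \<Rightarrow> real \<times> real \<Rightarrow> complex" where
  "dc2 s k p = (case s of Minkowski \<Rightarrow> pdy k p | Euclidean \<Rightarrow> (1/2) * (pdx k p + \<i> * pdy k p))"

lemmas pd_rules = pdx_bil[OF bb_mult] pdy_bil[OF bb_mult] pdx_bil[OF bb_cscale] pdy_bil[OF bb_cscale]
  pdx_lin[OF bl_cscale] pdy_lin[OF bl_cscale] pdx_lin[OF bl_cadj] pdy_lin[OF bl_cadj]
  pdx_add pdy_add pdx_diff pdy_diff pdx_const pdy_const

lemma LD_mult: "LD a p \<Longrightarrow> LD b p \<Longrightarrow> LD (\<lambda>q. a q ** b q) p" for a b :: "real \<times> real \<Rightarrow> 'n::finite cmat"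
  unfolding LD_def using pdx_bil[OF bb_mult, of a p b] pdy_bil[OF bb_mult, of a p b] by simp
lemma LD_smult: "LD k p \<Longrightarrow> LD a p \<Longrightarrow> LD (\<lambda>q. cscale (k q) (a q)) p" for a :: "real \<times> real \<Rightarrow> 'n::finite cmat"
  unfolding LD_def using pdx_bil[OF bb_cscale, of k p a] pdy_bil[OF bb_cscale, of k p a] by simp
lemma LD_cscale: "LD a p \<Longrightarrow> LD (\<lambda>q. cscale c (a q)) p" for a :: "real \<times> real \<Rightarrow> 'n::finite cmat"
  unfolding LD_def using pdx_lin[OF bl_cscale, of a p c] pdy_lin[OF bl_cscale, of a p c] by simp
lemma LD_cadj: "LD a p \<Longrightarrow> LD (\<lambda>q. cadj (a q)) p" for a :: "real \<times> real \<Rightarrow> 'n::finite cmat"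
  unfolding LD_def using pdx_lin[OF bl_cadj, of a p] pdy_lin[OF bl_cadj, of a p] by simp
lemma LD_add: "LD a p \<Longrightarrow> LD b p \<Longrightarrow> LD (\<lambda>q. a q + b q) p"
  unfolding LD_def using pdx_add[of a p b] pdy_add[of a p b] by simp
lemma LD_diff: "LD a p \<Longrightarrow> LD b p \<Longrightarrow> LD (\<lambda>q. a q - b q) p"
  unfolding LD_def using pdx_diff[of a p b] pdy_diff[of a p b] by simp
lemma LD_const: "LD (\<lambda>q. c) p"
  unfolding LD_def using pdx_const[of c p] pdy_const[of c p] by simp
lemma LD_comm: "LD a p \<Longrightarrow> LD b p \<Longrightarrow> LD (\<lambda>q. comm (a q) (b q)) p" for a b :: "real \<times> real \<Rightarrow> 'n::finite cmat"
  unfolding comm_def by (intro LD_diff LD_mult)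

lemmas cs_simps = cscale_add_right cscale_diff_right cscale_cscale cscale_mult_left cscale_mult_right
   matrix_add_rdistrib' matrix_diff_rdistrib matrix_add_ldistrib matrix_diff_ldistrib cscale_minus_right







lemma D1_mult: "LD a p \<Longrightarrow> LD b p \<Longrightarrow> D1 s (\<lambda>q. a q ** b q) p = D1 s a p ** b p + a p ** D1 s b p"
  unfolding LD_def D1_def 
  by (cases s) (simp_all only: pdx_bil[OF bb_mult, of a p b, THEN conjunct1] pdy_bil[OF bb_mult, of a p b, THEN conjunct1] setting.case, simp_all add: cs_simps algebra_simps)
lemma D2_mult: "LD a p \<Longrightarrow> LD b p \<Longrightarrow> D2 s (\<lambda>q. a q ** b q) p = D2 s a p ** b p + a p ** D2 s b p"
  unfolding LD_def D2_def 
  by (cases s) (simp_all only: pdx_bil[OF bb_mult, of a p b, THEN conjunct1] pdy_bil[OF bb_mult, of a p b, THEN conjunct1] setting.case, simp_all add: cs_simps algebra_simps)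
lemma D1_smult: "LD k p \<Longrightarrow> LD a p \<Longrightarrow> D1 s (\<lambda>q. cscale (k q) (a q)) p = cscale (dc1 s k p) (a p) + cscale (k p) (D1 s a p)"
  unfolding LD_def D1_def dc1_def 
  by (cases s) (simp_all only: pdx_bil[OF bb_cscale, of k p a, THEN conjunct1] pdy_bil[OF bb_cscale, of k p a, THEN conjunct1] setting.case, simp_all add: cscale_def vec_eq_iff algebra_simps)
lemma D2_smult: "LD k p \<Longrightarrow> LD a p \<Longrightarrow> D2 s (\<lambda>q. cscale (k q) (a q)) p = cscale (dc2 s k p) (a p) + cscale (k p) (D2 s a p)"
  unfolding LD_def D2_def dc2_def 
  by (cases s) (simp_all only: pdx_bil[OF bb_cscale, of k p a, THEN conjunct1] pdy_bil[OF bb_cscale, of k p a, THEN conjunct1] setting.case, simp_all add: cscale_def vec_eq_iff algebra_simps)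
lemma D1_cscale: "LD a p \<Longrightarrow> D1 s (\<lambda>q. cscale c (a q)) p = cscale c (D1 s a p)"
  unfolding LD_def D1_def 
  by (cases s) (simp_all only: pdx_lin[OF bl_cscale, of a p c, THEN conjunct1] pdy_lin[OF bl_cscale, of a p c, THEN conjunct1] setting.case, simp_all add: cscale_def vec_eq_iff algebra_simps)
lemma D2_cscale: "LD a p \<Longrightarrow> D2 s (\<lambda>q. cscale c (a q)) p = cscale c (D2 s a p)"
  unfolding LD_def D2_def 
  by (cases s) (simp_all only: pdx_lin[OF bl_cscale, of a p c, THEN conjunct1] pdy_lin[OF bl_cscale, of a p c, THEN conjunct1] setting.case, simp_all add: cscale_def vec_eq_iff algebra_simps)
lemma D1_add: "LD a p \<Longrightarrow> LD b p \<Longrightarrow> D1 s (\<lambda>q. a q + b q) p = D1 s a p + D1 s b p"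
  unfolding LD_def D1_def 
  by (cases s) (simp_all only: pdx_add[of a p b, THEN conjunct1] pdy_add[of a p b, THEN conjunct1] setting.case, simp_all add: cscale_def vec_eq_iff algebra_simps)
lemma D2_add: "LD a p \<Longrightarrow> LD b p \<Longrightarrow> D2 s (\<lambda>q. a q + b q) p = D2 s a p + D2 s b p"
  unfolding LD_def D2_def 
  by (cases s) (simp_all only: pdx_add[of a p b, THEN conjunct1] pdy_add[of a p b, THEN conjunct1] setting.case, simp_all add: cscale_def vec_eq_iff algebra_simps)
lemma D1_diff: "LD a p \<Longrightarrow> LD b p \<Longrightarrow> D1 s (\<lambda>q. a q - b q) p = D1 s a p - D1 s b p"
  unfolding LD_def D1_def 
  by (cases s) (simp_all only: pdx_diff[of a p b, THEN conjunct1] pdy_diff[of a p b, THEN conjunct1] setting.case, simp_all add: cscale_def vec_eq_iff algebra_simps)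
lemma D2_diff: "LD a p \<Longrightarrow> LD b p \<Longrightarrow> D2 s (\<lambda>q. a q - b q) p = D2 s a p - D2 s b p"
  unfolding LD_def D2_def 
  by (cases s) (simp_all only: pdx_diff[of a p b, THEN conjunct1] pdy_diff[of a p b, THEN conjunct1] setting.case, simp_all add: cscale_def vec_eq_iff algebra_simps)
lemma D1_const: "D1 s (\<lambda>q. c) p = 0"
  unfolding D1_def using pdx_const[of c p] pdy_const[of c p] by (cases s) simp_all
lemma D2_const: "D2 s (\<lambda>q. c) p = 0"
  unfolding D2_def using pdx_const[of c p] pdy_const[of c p] by (cases s) simp_all
lemma D1_comm: "LD a p \<Longrightarrow> LD b p \<Longrightarrow> D1 s (\<lambda>q. comm (a q) (b q)) p = comm (D1 s a p) (b p) + comm (a p) (D1 s b p)"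
  unfolding comm_def by (simp add: D1_diff D1_mult LD_mult algebra_simps)
lemma D2_comm: "LD a p \<Longrightarrow> LD b p \<Longrightarrow> D2 s (\<lambda>q. comm (a q) (b q)) p = comm (D2 s a p) (b p) + comm (a p) (D2 s b p)"
  unfolding comm_def by (simp add: D2_diff D2_mult LD_mult algebra_simps)

lemma D1_local: assumes "open U" "p \<in> U" "\<And>q. q \<in> U \<Longrightarrow> h q = k q" shows "D1 s h p = D1 s k p"
  using pdx_local[of U p h k, OF assms] pdy_local[of U p h k, OF assms] unfolding D1_def by (cases s) simp_all
lemma D2_local: assumes "open U" "p \<in> U" "\<And>q. q \<in> U \<Longrightarrow> h q = k q" shows "D2 s h p = D2 s k p"
  using pdx_local[of U p h k, OF assms] pdy_local[of U p h k, OF assms] unfolding D2_def by (cases s) simp_all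
lemma dc1_local: assumes "open U" "p \<in> U" "\<And>q. q \<in> U \<Longrightarrow> h q = k q" shows "dc1 s h p = dc1 s k p"
  using pdx_local[of U p h k, OF assms] pdy_local[of U p h k, OF assms] unfolding dc1_def by (cases s) simp_all
lemma dc2_local: assumes "open U" "p \<in> U" "\<And>q. q \<in> U \<Longrightarrow> h q = k q" shows "dc2 s h p = dc2 s k p"
  using pdx_local[of U p h k, OF assms] pdy_local[of U p h k, OF assms] unfolding dc2_def by (cases s) simp_all
lemma D1_fun: "D1 s h = (\<lambda>q. cscale (case s of Minkowski \<Rightarrow> 1 | Euclidean \<Rightarrow> 1/2) (pdx h q)
                         + cscale (case s of Minkowski \<Rightarrow> 0 | Euclidean \<Rightarrow> - \<i>/2) (pdy h q))"
  by (rule ext, cases s) (simp_all add: D1_def cscale_def vec_eq_iff algebra_simps)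
lemma D2_fun: "D2 s h = (\<lambda>q. cscale (case s of Minkowski \<Rightarrow> 0 | Euclidean \<Rightarrow> 1/2) (pdx h q)
                         + cscale (case s of Minkowski \<Rightarrow> 1 | Euclidean \<Rightarrow> \<i>/2) (pdy h q))"
  by (rule ext, cases s) (simp_all add: D2_def cscale_def vec_eq_iff algebra_simps)




lemma iter_pd_lin:
  fixes a b :: "real \<times> real \<Rightarrow> 'n::finite cmat"
  assumes U: "open U" and a: "smooth2_on U a" and b: "smooth2_on U b"
  shows "q \<in> U \<Longrightarrow> iter_pd bs (\<lambda>q. cscale c (a q) + cscale d (b q)) q = cscale c (iter_pd bs a q) + cscale d (iter_pd bs b q)"
proof (induction bs arbitrary: q)
  case Nil then show ?case by simp
next
  case (Cons x bs)
  have la: "ldx (iter_pd bs a) q" "ldy (iter_pd bs a) q" "ldx (iter_pd bs b) q" "ldy (iter_pd bs b) q"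
    using a b Cons.prems unfolding smooth2_on_def ldx_def ldy_def by auto
  have IH: "\<And>r. r \<in> U \<Longrightarrow> iter_pd bs (\<lambda>q. cscale c (a q) + cscale d (b q)) r = cscale c (iter_pd bs a r) + cscale d (iter_pd bs b r)"
    using Cons.IH by blast
  show ?case
  proof (cases x)
    case True
    have "iter_pd (x # bs) (\<lambda>q. cscale c (a q) + cscale d (b q)) q
        = pdy (\<lambda>q. cscale c (iter_pd bs a q) + cscale d (iter_pd bs b q)) q"
      using True pdy_local[OF U Cons.prems IH] by simp
    also have "\<dots> = cscale c (pdy (iter_pd bs a) q) + cscale d (pdy (iter_pd bs b) q)"
    proof -
      note A = pdy_lin[OF bl_cscale la(2), of c] and B = pdy_lin[OF bl_cscale la(4), of d]
      show ?thesis using pdy_add[OF A[THEN conjunct2] B[THEN conjunct2]] A B by simp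
    qed
    finally show ?thesis using True by simp
  next
    case False
    have "iter_pd (x # bs) (\<lambda>q. cscale c (a q) + cscale d (b q)) q
        = pdx (\<lambda>q. cscale c (iter_pd bs a q) + cscale d (iter_pd bs b q)) q"
      using False pdx_local[OF U Cons.prems IH] by simp
    also have "\<dots> = cscale c (pdx (iter_pd bs a) q) + cscale d (pdx (iter_pd bs b) q)"
    proof -
      note A = pdx_lin[OF bl_cscale la(1), of c] and B = pdx_lin[OF bl_cscale la(3), of d]
      show ?thesis using pdx_add[OF A[THEN conjunct2] B[THEN conjunct2]] A B by simp
    qed
    finally show ?thesis using False by simp
  qed
qed

lemma smooth2_lin:
  fixes a b :: "real \<times> real \<Rightarrow> 'n::finite cmat"
  assumes U: "open U" and a: "smooth2_on U a" and b: "smooth2_on U b"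
  shows "smooth2_on U (\<lambda>q. cscale c (a q) + cscale d (b q))"
  unfolding smooth2_on_def
proof (intro allI conjI ballI)
  fix bs
  have eq: "\<And>q. q \<in> U \<Longrightarrow> cscale c (iter_pd bs a q) + cscale d (iter_pd bs b q) = iter_pd bs (\<lambda>q. cscale c (a q) + cscale d (b q)) q"
    using iter_pd_lin[OF U a b] by simp
  have ca: "continuous_on U (iter_pd bs a)" "continuous_on U (iter_pd bs b)"
    using a b unfolding smooth2_on_def by auto
  have "continuous_on U (\<lambda>q. cscale c (iter_pd bs a q) + cscale d (iter_pd bs b q))"
    using continuous_on_add[OF bounded_linear.continuous_on[OF bl_cscale ca(1)] bounded_linear.continuous_on[OF bl_cscale ca(2)]] .
  thus "continuous_on U (iter_pd bs (\<lambda>q. cscale c (a q) + cscale d (b q)))"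
    using continuous_on_cong[of U U "\<lambda>q. cscale c (iter_pd bs a q) + cscale d (iter_pd bs b q)" "iter_pd bs (\<lambda>q. cscale c (a q) + cscale d (b q))"] eq by simp
  fix p assume p: "p \<in> U"
  have la: "LD (iter_pd bs a) p" "LD (iter_pd bs b) p"
    using a b p unfolding smooth2_on_def LD_def ldx_def ldy_def by auto
  have "LD (\<lambda>q. cscale c (iter_pd bs a q) + cscale d (iter_pd bs b q)) p"
    using LD_add[OF LD_cscale[OF la(1)] LD_cscale[OF la(2)]] .
  hence "LD (iter_pd bs (\<lambda>q. cscale c (a q) + cscale d (b q))) p"
    using LD_local[of U p _ "iter_pd bs (\<lambda>q. cscale c (a q) + cscale d (b q))", OF U p eq] by simp
  thus "(\<lambda>s. iter_pd bs (\<lambda>q. cscale c (a q) + cscale d (b q)) (s, snd p)) differentiable at (fst p)"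
       "(\<lambda>t. iter_pd bs (\<lambda>q. cscale c (a q) + cscale d (b q)) (fst p, t)) differentiable at (snd p)"
    unfolding LD_def ldx_def ldy_def by auto
qed

lemma smooth2_D1: fixes h :: "real \<times> real \<Rightarrow> 'n::finite cmat" shows "open U \<Longrightarrow> smooth2_on U h \<Longrightarrow> smooth2_on U (D1 s h)"
  unfolding D1_fun by (rule smooth2_lin[OF _ smooth2_pdx smooth2_pdy])
lemma smooth2_D2: fixes h :: "real \<times> real \<Rightarrow> 'n::finite cmat" shows "open U \<Longrightarrow> smooth2_on U h \<Longrightarrow> smooth2_on U (D2 s h)"
  unfolding D2_fun by (rule smooth2_lin[OF _ smooth2_pdx smooth2_pdy])

lemma pdx_lin2: fixes u v :: "real \<times> real \<Rightarrow> 'n::finite cmat"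
  assumes "ldx u p" "ldx v p"
  shows "pdx (\<lambda>q. cscale a (u q) + cscale b (v q)) p = cscale a (pdx u p) + cscale b (pdx v p)"
proof -
  note A = pdx_lin[OF bl_cscale assms(1), of a] and B = pdx_lin[OF bl_cscale assms(2), of b]
  show ?thesis using pdx_add[OF A[THEN conjunct2] B[THEN conjunct2]] A B by simp
qed
lemma pdy_lin2: fixes u v :: "real \<times> real \<Rightarrow> 'n::finite cmat"
  assumes "ldy u p" "ldy v p"
  shows "pdy (\<lambda>q. cscale a (u q) + cscale b (v q)) p = cscale a (pdy u p) + cscale b (pdy v p)"
proof -
  note A = pdy_lin[OF bl_cscale assms(1), of a] and B = pdy_lin[OF bl_cscale assms(2), of b]
  show ?thesis using pdy_add[OF A[THEN conjunct2] B[THEN conjunct2]] A B by simp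
qed

lemma schwarz_D:
  fixes h :: "real \<times> real \<Rightarrow> 'n::finite cmat"
  assumes U: "open U" and h: "smooth2_on U h" and p: "p \<in> U"
  shows "D2 s (D1 s h) p = D1 s (D2 s h) p"
proof -
  have l: "ldx (pdx h) p" "ldy (pdx h) p" "ldx (pdy h) p" "ldy (pdy h) p"
    using smooth2_LD[OF smooth2_pdx[OF h] p] smooth2_LD[OF smooth2_pdy[OF h] p] unfolding LD_def by auto
  have sw: "pdy (pdx h) p = pdx (pdy h) p" by (rule schwarz_pd[OF U h p])
  define a1 :: complex where "a1 = (case s of Minkowski \<Rightarrow> 1 | Euclidean \<Rightarrow> 1/2)"
  define b1 :: complex where "b1 = (case s of Minkowski \<Rightarrow> 0 | Euclidean \<Rightarrow> - \<i>/2)"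
  define a2 :: complex where "a2 = (case s of Minkowski \<Rightarrow> 0 | Euclidean \<Rightarrow> 1/2)"
  define b2 :: complex where "b2 = (case s of Minkowski \<Rightarrow> 1 | Euclidean \<Rightarrow> \<i>/2)"
  have f1: "\<And>g. D1 s g = (\<lambda>q. cscale a1 (pdx g q) + cscale b1 (pdy g q))"
    unfolding a1_def b1_def by (rule D1_fun)
  have f2: "\<And>g. D2 s g = (\<lambda>q. cscale a2 (pdx g q) + cscale b2 (pdy g q))"
    unfolding a2_def b2_def by (rule D2_fun)
  have "D2 s (D1 s h) p = cscale a2 (cscale a1 (pdx (pdx h) p) + cscale b1 (pdx (pdy h) p))
                         + cscale b2 (cscale a1 (pdy (pdx h) p) + cscale b1 (pdy (pdy h) p))"
    unfolding f2 unfolding f1 using pdx_lin2[OF l(1) l(3)] pdy_lin2[OF l(2) l(4)] by simp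
  moreover have "D1 s (D2 s h) p = cscale a1 (cscale a2 (pdx (pdx h) p) + cscale b2 (pdx (pdy h) p))
                         + cscale b1 (cscale a2 (pdy (pdx h) p) + cscale b2 (pdy (pdy h) p))"
    unfolding f1 unfolding f2 using pdx_lin2[OF l(1) l(3)] pdy_lin2[OF l(2) l(4)] by simp
  ultimately show ?thesis
    unfolding a1_def b1_def a2_def b2_def using sw
    by (cases s) (simp_all add: cscale_def vec_eq_iff algebra_simps)
qed




lemma smooth1_deriv: "smooth1_on S f \<Longrightarrow> smooth1_on S (deriv f)"
  unfolding smooth1_on_def by (metis funpow_Suc_right o_apply)

lemma smooth1_D: "smooth1_on S f \<Longrightarrow> x \<in> S \<Longrightarrow> DERIV f x :> deriv f x"
  unfolding smooth1_on_def using DERIV_deriv_iff_real_differentiable by (metis funpow_0)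

lemma real_x:
  assumes U: "open U" and f: "smooth1_on (fst ` U) f" and k: "\<And>q. q \<in> U \<Longrightarrow> k q = complex_of_real (f (fst q))"
    and q: "q \<in> U"
  shows "LD k q \<and> dc1 Minkowski k q = of_real (deriv f (fst q)) \<and> dc2 Minkowski k q = 0"
proof -
  have d: "DERIV f (fst q) :> deriv f (fst q)" using smooth1_D[OF f] q by auto
  have hx: "HX (\<lambda>q. complex_of_real (f (fst q))) q (of_real (deriv f (fst q)))"
    unfolding HX_def using has_vector_derivative_of_real[OF d] by simp
  have hy: "HY (\<lambda>q. complex_of_real (f (fst q))) q 0"
    unfolding HY_def by simp
  have kx: "HX k q (of_real (deriv f (fst q)))" by (rule HX_local[OF U q _ hx]) (simp add: k)
  have ky: "HY k q 0" by (rule HY_local[OF U q _ hy]) (simp add: k)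
  show ?thesis using HX_pdx[OF kx] HY_pdy[OF ky] HX_ldx[OF kx] HY_ldy[OF ky]
    by (simp add: LD_def dc1_def dc2_def)
qed

lemma real_y:
  assumes U: "open U" and f: "smooth1_on (snd ` U) f" and k: "\<And>q. q \<in> U \<Longrightarrow> k q = complex_of_real (f (snd q))"
    and q: "q \<in> U"
  shows "LD k q \<and> dc1 Minkowski k q = 0 \<and> dc2 Minkowski k q = of_real (deriv f (snd q))"
proof -
  have d: "DERIV f (snd q) :> deriv f (snd q)" using smooth1_D[OF f] q by auto
  have hy: "HY (\<lambda>q. complex_of_real (f (snd q))) q (of_real (deriv f (snd q)))"
    unfolding HY_def using has_vector_derivative_of_real[OF d] by simp
  have hx: "HX (\<lambda>q. complex_of_real (f (snd q))) q 0"
    unfolding HX_def by simp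
  have kx: "HX k q 0" by (rule HX_local[OF U q _ hx]) (simp add: k)
  have ky: "HY k q (of_real (deriv f (snd q)))" by (rule HY_local[OF U q _ hy]) (simp add: k)
  show ?thesis using HX_pdx[OF kx] HY_pdy[OF ky] HX_ldx[OF kx] HY_ldy[OF ky]
    by (simp add: LD_def dc1_def dc2_def)
qed

lemma open_V: "open U \<Longrightarrow> open {z. (Re z, Im z) \<in> U}"
proof -
  assume U: "open U"
  have "{z. (Re z, Im z) \<in> U} = (\<lambda>z. (Re z, Im z)) -` U" by auto
  moreover have "open ((\<lambda>z. (Re z, Im z)) -` U)"
    by (rule open_vimage[OF U]) (auto intro!: continuous_intros)
  ultimately show ?thesis by simp
qed

lemma holo_HXY:
  assumes U: "open U" and f: "f holomorphic_on {z. (Re z, Im z) \<in> U}" and q: "q \<in> U"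
  shows "HX (\<lambda>q. f (Complex (fst q) (snd q))) q (deriv f (Complex (fst q) (snd q)))
       \<and> HY (\<lambda>q. f (Complex (fst q) (snd q))) q (\<i> * deriv f (Complex (fst q) (snd q)))"
proof -
  let ?z = "Complex (fst q) (snd q)"
  have d: "(f has_field_derivative deriv f ?z) (at ?z)"
    by (rule holomorphic_derivI[OF f open_V[OF U]]) (use q in auto)
  have c1: "((\<lambda>s. Complex s (snd q)) has_vector_derivative 1) (at (fst q))"
  proof -
    have "((\<lambda>s. complex_of_real s + \<i> * complex_of_real (snd q)) has_vector_derivative 1 + 0) (at (fst q))"
      by (intro has_vector_derivative_add has_vector_derivative_const)
         (use has_vector_derivative_of_real[OF DERIV_ident] in simp)
    thus ?thesis by (simp add: complex_eq_iff[symmetric] Complex_eq)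
  qed
  have c2: "((\<lambda>t. Complex (fst q) t) has_vector_derivative \<i>) (at (snd q))"
  proof -
    have "((\<lambda>t. complex_of_real (fst q) + \<i> * complex_of_real t) has_vector_derivative 0 + \<i> * 1) (at (snd q))"
      by (intro has_vector_derivative_add has_vector_derivative_const has_vector_derivative_mult_right)
         (use has_vector_derivative_of_real[OF DERIV_ident] in simp)
    thus ?thesis by (simp add: Complex_eq)
  qed
  have "((f \<circ> (\<lambda>s. Complex s (snd q))) has_vector_derivative (1 * deriv f ?z)) (at (fst q))"
    by (rule field_vector_diff_chain_at[OF c1]) (simp add: d)
  moreover have "((f \<circ> (\<lambda>t. Complex (fst q) t)) has_vector_derivative (\<i> * deriv f ?z)) (at (snd q))"
    by (rule field_vector_diff_chain_at[OF c2]) (simp add: d)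
  ultimately show ?thesis unfolding HX_def HY_def by (simp add: o_def)
qed

lemma holo_k:
  assumes U: "open U" and f: "f holomorphic_on {z. (Re z, Im z) \<in> U}"
    and k: "\<And>q. q \<in> U \<Longrightarrow> k q = f (Complex (fst q) (snd q))" and q: "q \<in> U"
  shows "LD k q \<and> dc1 Euclidean k q = deriv f (Complex (fst q) (snd q)) \<and> dc2 Euclidean k q = 0"
proof -
  note h = holo_HXY[OF U f q]
  have kx: "HX k q (deriv f (Complex (fst q) (snd q)))" by (rule HX_local[OF U q _ h[THEN conjunct1]]) (simp add: k)
  have ky: "HY k q (\<i> * deriv f (Complex (fst q) (snd q)))" by (rule HY_local[OF U q _ h[THEN conjunct2]]) (simp add: k)
  show ?thesis using HX_pdx[OF kx] HY_pdy[OF ky] HX_ldx[OF kx] HY_ldy[OF ky]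
    by (simp add: LD_def dc1_def dc2_def algebra_simps)
qed

lemma antiholo_k:
  assumes U: "open U" and f: "f holomorphic_on {z. (Re z, Im z) \<in> U}"
    and k: "\<And>q. q \<in> U \<Longrightarrow> k q = cnj (f (Complex (fst q) (snd q)))" and q: "q \<in> U"
  shows "LD k q \<and> dc1 Euclidean k q = 0 \<and> dc2 Euclidean k q = cnj (deriv f (Complex (fst q) (snd q)))"
proof -
  note h = holo_HXY[OF U f q]
  have kx: "HX k q (cnj (deriv f (Complex (fst q) (snd q))))"
    by (rule HX_local[OF U q _ HX_lin[OF bounded_linear_cnj h[THEN conjunct1]]]) (simp add: k)
  have ky: "HY k q (cnj (\<i> * deriv f (Complex (fst q) (snd q))))"
    by (rule HY_local[OF U q _ HY_lin[OF bounded_linear_cnj h[THEN conjunct2]]]) (simp add: k)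
  show ?thesis using HX_pdx[OF kx] HY_pdy[OF ky] HX_ldx[OF kx] HY_ldy[OF ky]
    by (simp add: LD_def dc1_def dc2_def algebra_simps)
qed

lemma coeffs_props:
  assumes U: "open U" and cc: "conformal_coeffs s U fF gG" and q: "q \<in> U"
  shows "LD fF q \<and> LD gG q \<and> LD (dc1 s fF) q \<and> LD (dc2 s gG) q \<and> dc2 s fF q = 0 \<and> dc1 s gG q = 0
     \<and> dc2 s (dc1 s fF) q = 0 \<and> dc1 s (dc2 s gG) q = 0
     \<and> (s = Minkowski \<longrightarrow> cnj (fF q) = fF q \<and> cnj (gG q) = gG q) \<and> (s = Euclidean \<longrightarrow> gG q = cnj (fF q))"
proof (cases s)
  case Minkowski
  then obtain f g :: "real \<Rightarrow> real" where f: "smooth1_on (fst ` U) f" and g: "smooth1_on (snd ` U) g"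
    and fg: "\<And>p. p \<in> U \<Longrightarrow> fF p = complex_of_real (f (fst p)) \<and> gG p = complex_of_real (g (snd p))"
    using cc unfolding conformal_coeffs_def by auto
  have a: "\<And>r. r \<in> U \<Longrightarrow> LD fF r \<and> dc1 Minkowski fF r = of_real (deriv f (fst r)) \<and> dc2 Minkowski fF r = 0"
    using real_x[OF U f] fg by blast
  have b: "\<And>r. r \<in> U \<Longrightarrow> LD gG r \<and> dc1 Minkowski gG r = 0 \<and> dc2 Minkowski gG r = of_real (deriv g (snd r))"
    using real_y[OF U g] fg by blast
  have c: "LD (dc1 Minkowski fF) q \<and> dc2 Minkowski (dc1 Minkowski fF) q = 0"
    using real_x[OF U smooth1_deriv[OF f] _ q, of "dc1 Minkowski fF"] a by blast
  have d: "LD (dc2 Minkowski gG) q \<and> dc1 Minkowski (dc2 Minkowski gG) q = 0"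
    using real_y[OF U smooth1_deriv[OF g] _ q, of "dc2 Minkowski gG"] b by blast
  show ?thesis using a[OF q] b[OF q] c d fg[OF q] Minkowski by simp
next
  case Euclidean
  then obtain f where f: "f holomorphic_on {z. (Re z, Im z) \<in> U}"
    and fg: "\<And>p. p \<in> U \<Longrightarrow> fF p = f (Complex (fst p) (snd p)) \<and> gG p = cnj (f (Complex (fst p) (snd p)))"
    using cc unfolding conformal_coeffs_def by auto
  have f': "deriv f holomorphic_on {z. (Re z, Im z) \<in> U}" by (rule holomorphic_deriv[OF f open_V[OF U]])
  have a: "\<And>r. r \<in> U \<Longrightarrow> LD fF r \<and> dc1 Euclidean fF r = deriv f (Complex (fst r) (snd r)) \<and> dc2 Euclidean fF r = 0"
    using holo_k[OF U f] fg by blast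
  have b: "\<And>r. r \<in> U \<Longrightarrow> LD gG r \<and> dc1 Euclidean gG r = 0 \<and> dc2 Euclidean gG r = cnj (deriv f (Complex (fst r) (snd r)))"
    using antiholo_k[OF U f] fg by blast
  have c: "LD (dc1 Euclidean fF) q \<and> dc2 Euclidean (dc1 Euclidean fF) q = 0"
    using holo_k[OF U f' _ q, of "dc1 Euclidean fF"] a by blast
  have d: "LD (dc2 Euclidean gG) q \<and> dc1 Euclidean (dc2 Euclidean gG) q = 0"
    using antiholo_k[OF U f' _ q, of "dc2 Euclidean gG"] b by blast
  show ?thesis using a[OF q] b[OF q] c d fg[OF q] Euclidean by simp
qed




lemma comm_add_left: "comm (A + B) C = comm A C + comm B C"
  unfolding comm_def by (simp add: matrix_add_rdistrib' matrix_add_ldistrib)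
lemma comm_add_right: "comm C (A + B) = comm C A + comm C B"
  unfolding comm_def by (simp add: matrix_add_rdistrib' matrix_add_ldistrib)
lemma comm_diff_left: "comm (A - B) C = comm A C - comm B C"
  unfolding comm_def by (simp add: matrix_diff_rdistrib matrix_diff_ldistrib)
lemma comm_diff_right: "comm C (A - B) = comm C A - comm C B"
  unfolding comm_def by (simp add: matrix_diff_rdistrib matrix_diff_ldistrib)
lemma comm_cscale_left: "comm (cscale c A) B = cscale c (comm A B)"
  unfolding comm_def by (simp add: cscale_mult_left cscale_mult_right cscale_diff_right)
lemma comm_cscale_right: "comm A (cscale c B) = cscale c (comm A B)"
  unfolding comm_def by (simp add: cscale_mult_left cscale_mult_right cscale_diff_right)
lemma comm_self[simp]: "comm A A = 0"
  unfolding comm_def by simp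
lemma comm_zero_left[simp]: "comm 0 A = 0" and comm_zero_right[simp]: "comm A 0 = 0"
  unfolding comm_def by simp_all
lemma comm_anti: "comm B A = - comm A B"
  unfolding comm_def by simp

lemma cadj_mult: "cadj (A ** B) = cadj B ** cadj A" for A B :: "'n::finite cmat"
  by (simp add: cadj_def matrix_matrix_mult_def vec_eq_iff mult.commute)
lemma cadj_cadj[simp]: "cadj (cadj A) = A"
  by (simp add: cadj_def vec_eq_iff)
lemma cadj_cscale: "cadj (cscale c A) = cscale (cnj c) (cadj A)"
  by (simp add: cadj_def cscale_def vec_eq_iff)
lemma cadj_add: "cadj (A + B) = cadj A + cadj B"
  by (simp add: cadj_def vec_eq_iff)
lemma cadj_minus: "cadj (- A) = - cadj A"
  by (simp add: cadj_def vec_eq_iff)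
lemma trace_cscale: "trace (cscale c A) = c * trace A"
  by (simp add: trace_def cscale_def sum_distrib_left)
lemma trace_comm: "trace (comm A B) = 0" for A B :: "'n::finite cmat"
  unfolding comm_def by (simp add: trace_sub trace_mul_sym[of A B])

lemma inv_eq_cadj: "cadj A ** A = mat 1 \<Longrightarrow> matrix_inv A = cadj A" for A :: "'n::finite cmat"
proof -
  assume h: "cadj A ** A = mat 1"
  hence h2: "A ** cadj A = mat 1" using matrix_left_right_inverse by blast
  have ex: "\<exists>B. A ** B = mat 1 \<and> B ** A = mat 1" using h h2 by blast
  define B where "B = matrix_inv A"
  have B: "A ** B = mat 1 \<and> B ** A = mat 1" unfolding B_def matrix_inv_def using someI_ex[OF ex] .
  have "B = (cadj A ** A) ** B" using h by simp
  also have "\<dots> = cadj A" using B by (simp add: matrix_mul_assoc[symmetric])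
  finally show ?thesis unfolding B_def .
qed

lemma su_conj: "cadj P ** P = mat 1 \<Longrightarrow> in_su M \<Longrightarrow> in_su (cadj P ** M ** P)" for P M :: "'n::finite cmat"
proof -
  assume h: "cadj P ** P = mat 1" and m: "in_su M"
  hence h2: "P ** cadj P = mat 1" using matrix_left_right_inverse by blast
  have "cadj (cadj P ** M ** P) = - (cadj P ** M ** P)"
    using m unfolding in_su_def by (simp add: cadj_mult matrix_mul_assoc matrix_neg_left matrix_neg_right)
  moreover have "trace (cadj P ** M ** P) = 0"
  proof -
    have "trace (cadj P ** M ** P) = trace (P ** (cadj P ** M))" by (rule trace_mul_sym)
    also have "\<dots> = trace M" by (simp add: matrix_mul_assoc h2)
    finally show ?thesis using m unfolding in_su_def by simp
  qed
  ultimately show ?thesis unfolding in_su_def by simp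
qed

lemma alg_core1:
  fixes a t a11 a21 b u1 u2 :: "'n::finite cmat"
  assumes hu1: "u1 = cscale c1 (comm a t)"
  shows "cscale c1 (comm (cscale f1 a + cscale fF a11 + cscale gG a21) t + comm a (cscale fF a + cscale gG b))
   = cscale f1 u1 + cscale fF (cscale c1 (comm a11 t + comm a a)) + cscale gG (cscale c1 (comm a21 t + comm a b) + comm u1 u2)
     + comm (cscale fF u1 + cscale gG u2) u1"
proof -
  have e: "comm (cscale fF u1 + cscale gG u2) u1 = - cscale gG (comm u1 u2)"
    by (simp add: comm_add_left comm_cscale_left comm_anti[of u2 u1] cscale_minus_right)
  show ?thesis unfolding e unfolding hu1
    by (simp add: comm_add_left comm_add_right comm_cscale_left comm_cscale_right cscale_add_right cscale_cscale algebra_simps)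
qed

lemma alg_core2:
  fixes a t b b21 b22 u1 u2 :: "'n::finite cmat"
  assumes hu2: "u2 = cscale c2 (comm b t)"
  shows "cscale c2 (comm (cscale fF b21 + cscale g2 b + cscale gG b22) t + comm b (cscale fF a + cscale gG b))
   = cscale fF (cscale c2 (comm b21 t + comm b a) - comm u1 u2) + cscale g2 u2 + cscale gG (cscale c2 (comm b22 t + comm b b))
     + comm (cscale fF u1 + cscale gG u2) u2"
proof -
  have e: "comm (cscale fF u1 + cscale gG u2) u2 = cscale fF (comm u1 u2)"
    by (simp add: comm_add_left comm_cscale_left)
  show ?thesis unfolding e unfolding hu2
    by (simp add: comm_add_left comm_add_right comm_cscale_left comm_cscale_right cscale_add_right cscale_diff_right cscale_cscale algebra_simps)
qed

lemma zc_aux1: "(a::'a::ab_group_add) - b + c = 0 \<Longrightarrow> b = a + c"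
  by (metis add.commute add_diff_eq eq_iff_diff_eq_0)
lemma zc_aux2: "(a::'a::ab_group_add) - b + c = 0 \<Longrightarrow> a = b - c"
  by (metis add_diff_cancel diff_add_cancel zc_aux1)

lemma alg_final:
  fixes W a b d m u1 u2 :: "'n::finite cmat"
  shows "(W + (comm b u1 + comm m d)) - (W + (comm a u2 + comm m (d + comm u1 u2))) + comm (a + comm m u1) u2 + comm u1 (b + comm m u2) = 0"
  unfolding comm_def
  by (simp add: matrix_add_rdistrib' matrix_add_ldistrib matrix_diff_rdistrib matrix_diff_ldistrib matrix_mul_assoc algebra_simps)

lemma alg_DF:
  fixes X C P u M DM :: "'n::finite cmat"
  assumes "X = - (C ** u)"
  shows "(X ** M + C ** DM) ** P + (C ** M) ** (u ** P) = C ** (DM + comm M u) ** P"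
  unfolding assms comm_def
  by (simp add: matrix_add_rdistrib' matrix_add_ldistrib matrix_diff_rdistrib matrix_diff_ldistrib matrix_mul_assoc matrix_neg_left algebra_simps)

lemma alg_DPsi:
  fixes P u M DM :: "'n::finite cmat"
  shows "DM ** P + M ** (u ** P) = u ** (M ** P) + (DM + comm M u) ** P"
  unfolding comm_def
  by (simp add: matrix_add_rdistrib' matrix_add_ldistrib matrix_diff_rdistrib matrix_diff_ldistrib matrix_mul_assoc algebra_simps)




theorem proposition4:
  fixes s :: setting and U :: "(real \<times> real) set" and lam :: complex
    and \<theta> \<Phi> :: "real \<times> real \<Rightarrow> complex^'n::finite^'n" and fF gG :: "real \<times> real \<Rightarrow> complex"
  assumes "open U"
    and "lam \<noteq> 1" and "lam \<noteq> -1"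
    and "smooth2_on U \<theta>" and "smooth2_on U \<Phi>"
    and "\<forall>p\<in>U. in_su (\<theta> p)"
    and "\<forall>p\<in>U. rank_one_herm_proj (mat (1 / of_nat CARD('n)) - cscale \<i> (\<theta> p))"
    and "\<forall>p\<in>U. comm (D2 s (D1 s \<theta>) p) (\<theta> p) = 0"
    and "\<forall>p\<in>U. in_SU (\<Phi> p)"
    and "\<forall>p\<in>U. D1 s \<Phi> p = lax_u1 s lam \<theta> p ** \<Phi> p \<and> D2 s \<Phi> p = lax_u2 s lam \<theta> p ** \<Phi> p"
    and "\<forall>p\<in>U. setting_reality s (lax_u1 s lam \<theta> p) (lax_u2 s lam \<theta> p)"
    and "conformal_coeffs s U fF gG"
  shows "let u1 = lax_u1 s lam \<theta>; u2 = lax_u2 s lam \<theta>;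
             A1 = prw_u1 s lam fF gG \<theta>; A2 = prw_u2 s lam fF gG \<theta>;
             F = (\<lambda>p. matrix_inv (\<Phi> p) ** (cscale (fF p) (u1 p) + cscale (gG p) (u2 p)) ** \<Phi> p);
             \<Psi> = (\<lambda>p. (cscale (fF p) (u1 p) + cscale (gG p) (u2 p)) ** \<Phi> p)
         in (\<forall>p\<in>U. in_su (F p)
                 \<and> D1 s F p = matrix_inv (\<Phi> p) ** A1 p ** \<Phi> p
                 \<and> D2 s F p = matrix_inv (\<Phi> p) ** A2 p ** \<Phi> p
                 \<and> \<Psi> p = \<Phi> p ** F p)
            \<and> LSP_symmetry s U u1 u2 \<Phi> A1 A2 \<Psi>"
proof -
  note U = assms(1) and s\<theta> = assms(4) and s\<Phi> = assms(5) and SU = assms(9) and lsp = assms(10)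
    and real = assms(11) and cc = assms(12)
  define c1 :: complex where "c1 = -2 / (1 + lam)"
  define c2 :: complex where "c2 = -2 / (1 - lam)"
  define T1 where "T1 = D1 s \<theta>"
  define T2 where "T2 = D2 s \<theta>"
  define u1 where "u1 = lax_u1 s lam \<theta>"
  define u2 where "u2 = lax_u2 s lam \<theta>"
  define A1 where "A1 = prw_u1 s lam fF gG \<theta>"
  define A2 where "A2 = prw_u2 s lam fF gG \<theta>"
  define M where "M = (\<lambda>p. cscale (fF p) (u1 p) + cscale (gG p) (u2 p))"
  define f1 where "f1 = dc1 s fF"
  define g2 where "g2 = dc2 s gG"
  have u1f: "u1 = (\<lambda>q. cscale c1 (comm (T1 q) (\<theta> q)))"
    by (rule ext) (simp add: u1_def lax_u1_def c1_def T1_def)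
  have u2f: "u2 = (\<lambda>q. cscale c2 (comm (T2 q) (\<theta> q)))"
    by (rule ext) (simp add: u2_def lax_u2_def c2_def T2_def)
  have sT1: "smooth2_on U T1" unfolding T1_def by (rule smooth2_D1[OF U s\<theta>])
  have sT2: "smooth2_on U T2" unfolding T2_def by (rule smooth2_D2[OF U s\<theta>])
  have sT11: "smooth2_on U (D1 s T1)" by (rule smooth2_D1[OF U sT1])
  have sT21: "smooth2_on U (D2 s T1)" by (rule smooth2_D2[OF U sT1])
  have sT12: "smooth2_on U (D1 s T2)" by (rule smooth2_D1[OF U sT2])
  have sT22: "smooth2_on U (D2 s T2)" by (rule smooth2_D2[OF U sT2])
  have LD\<theta>: "\<And>r. r \<in> U \<Longrightarrow> LD \<theta> r" using smooth2_LD[OF s\<theta>] .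
  have LD\<Phi>: "\<And>r. r \<in> U \<Longrightarrow> LD \<Phi> r" using smooth2_LD[OF s\<Phi>] .
  have LDT: "\<And>r. r \<in> U \<Longrightarrow> LD T1 r \<and> LD T2 r \<and> LD (D1 s T1) r \<and> LD (D2 s T1) r \<and> LD (D1 s T2) r \<and> LD (D2 s T2) r"
    using smooth2_LD[OF sT1] smooth2_LD[OF sT2] smooth2_LD[OF sT11] smooth2_LD[OF sT21]
      smooth2_LD[OF sT12] smooth2_LD[OF sT22] by blast
  have co: "\<And>r. r \<in> U \<Longrightarrow> LD fF r \<and> LD gG r \<and> LD f1 r \<and> LD g2 r \<and> dc2 s fF r = 0 \<and> dc1 s gG r = 0
     \<and> dc2 s f1 r = 0 \<and> dc1 s g2 r = 0
     \<and> (s = Minkowski \<longrightarrow> cnj (fF r) = fF r \<and> cnj (gG r) = gG r) \<and> (s = Euclidean \<longrightarrow> gG r = cnj (fF r))"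
    unfolding f1_def g2_def using coeffs_props[OF U cc] by blast
  have sw0: "\<And>r. r \<in> U \<Longrightarrow> D2 s T1 r = D1 s T2 r"
    unfolding T1_def T2_def by (rule schwarz_D[OF U s\<theta>])
  have sw1: "\<And>r. r \<in> U \<Longrightarrow> D2 s (D1 s T1) r = D1 s (D2 s T1) r"
    by (rule schwarz_D[OF U sT1])
  have sw2: "\<And>r. r \<in> U \<Longrightarrow> D2 s (D1 s T2) r = D1 s (D2 s T2) r"
    by (rule schwarz_D[OF U sT2])
  have sw\<Phi>: "\<And>r. r \<in> U \<Longrightarrow> D2 s (D1 s \<Phi>) r = D1 s (D2 s \<Phi>) r"
    by (rule schwarz_D[OF U s\<Phi>])
  have LDu: "\<And>r. r \<in> U \<Longrightarrow> LD u1 r \<and> LD u2 r"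
  proof -
    fix r assume r: "r \<in> U"
    show "LD u1 r \<and> LD u2 r" unfolding u1f u2f
      using LD_cscale[OF LD_comm[of T1 r \<theta>]] LD_cscale[OF LD_comm[of T2 r \<theta>]] LDT[OF r] LD\<theta>[OF r] by blast
  qed
  have T1r: "\<And>r. D1 s \<theta> r = T1 r" and T2r: "\<And>r. D2 s \<theta> r = T2 r" by (simp_all add: T1_def T2_def)
  have d11: "\<And>r. r \<in> U \<Longrightarrow> D1 s u1 r = cscale c1 (comm (D1 s T1 r) (\<theta> r) + comm (T1 r) (T1 r))"
    unfolding u1f using LDT LD\<theta> by (simp add: D1_cscale D1_comm LD_comm T1r)
  have d21: "\<And>r. r \<in> U \<Longrightarrow> D2 s u1 r = cscale c1 (comm (D2 s T1 r) (\<theta> r) + comm (T1 r) (T2 r))"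
    unfolding u1f using LDT LD\<theta> by (simp add: D2_cscale D2_comm LD_comm T2r)
  have d12: "\<And>r. r \<in> U \<Longrightarrow> D1 s u2 r = cscale c2 (comm (D1 s T2 r) (\<theta> r) + comm (T2 r) (T1 r))"
    unfolding u2f using LDT LD\<theta> by (simp add: D1_cscale D1_comm LD_comm T1r)
  have d22: "\<And>r. r \<in> U \<Longrightarrow> D2 s u2 r = cscale c2 (comm (D2 s T2 r) (\<theta> r) + comm (T2 r) (T2 r))"
    unfolding u2f using LDT LD\<theta> by (simp add: D2_cscale D2_comm LD_comm T2r)
  have cPP: "\<And>r. r \<in> U \<Longrightarrow> cadj (\<Phi> r) ** \<Phi> r = mat 1" using SU unfolding in_SU_def by blast
  have PcP: "\<And>r. r \<in> U \<Longrightarrow> \<Phi> r ** cadj (\<Phi> r) = mat 1" using cPP matrix_left_right_inverse by blast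
  have ZC: "\<And>r. r \<in> U \<Longrightarrow> D2 s u1 r - D1 s u2 r + comm (u1 r) (u2 r) = 0"
  proof -
    fix r assume r: "r \<in> U"
    have l1: "\<And>q. q \<in> U \<Longrightarrow> D1 s \<Phi> q = u1 q ** \<Phi> q" using lsp u1_def by blast
    have l2: "\<And>q. q \<in> U \<Longrightarrow> D2 s \<Phi> q = u2 q ** \<Phi> q" using lsp u2_def by blast
    have "D2 s (D1 s \<Phi>) r = D2 s u1 r ** \<Phi> r + u1 r ** (u2 r ** \<Phi> r)"
      using D2_local[OF U r l1] D2_mult[of u1 r \<Phi> s] LDu[OF r] LD\<Phi>[OF r] l2[OF r] by simp
    moreover have "D1 s (D2 s \<Phi>) r = D1 s u2 r ** \<Phi> r + u2 r ** (u1 r ** \<Phi> r)"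
      using D1_local[OF U r l2] D1_mult[of u2 r \<Phi> s] LDu[OF r] LD\<Phi>[OF r] l1[OF r] by simp
    ultimately have "(D2 s u1 r - D1 s u2 r + comm (u1 r) (u2 r)) ** \<Phi> r = 0"
      using sw\<Phi>[OF r] unfolding comm_def
      apply (simp add: matrix_add_rdistrib' matrix_diff_rdistrib matrix_mul_assoc)
      by (metis (no_types, lifting) add_diff_cancel_left' diff_add_cancel diff_diff_eq2 diff_self add.commute)
    hence "(D2 s u1 r - D1 s u2 r + comm (u1 r) (u2 r)) ** \<Phi> r ** cadj (\<Phi> r) = 0" by simp
    thus "D2 s u1 r - D1 s u2 r + comm (u1 r) (u2 r) = 0"
      using PcP[OF r] by (simp add: matrix_mul_assoc[symmetric])
  qed
  have LDM: "\<And>r. r \<in> U \<Longrightarrow> LD M r"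
  proof -
    fix r assume r: "r \<in> U"
    show "LD M r" unfolding M_def
      using LD_add[OF LD_smult[of fF r u1] LD_smult[of gG r u2]] LDu[OF r] co[OF r] by blast
  qed
  have dM1: "\<And>r. r \<in> U \<Longrightarrow> D1 s M r = cscale (f1 r) (u1 r) + cscale (fF r) (D1 s u1 r) + cscale (gG r) (D1 s u2 r)"
  proof -
    fix r assume r: "r \<in> U"
    note L = LDu[OF r] co[OF r]
    show "D1 s M r = cscale (f1 r) (u1 r) + cscale (fF r) (D1 s u1 r) + cscale (gG r) (D1 s u2 r)"
      unfolding M_def using L by (simp add: D1_add D1_smult LD_smult f1_def)
  qed
  have dM2: "\<And>r. r \<in> U \<Longrightarrow> D2 s M r = cscale (fF r) (D2 s u1 r) + cscale (g2 r) (u2 r) + cscale (gG r) (D2 s u2 r)"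
  proof -
    fix r assume r: "r \<in> U"
    note L = LDu[OF r] co[OF r]
    show "D2 s M r = cscale (fF r) (D2 s u1 r) + cscale (g2 r) (u2 r) + cscale (gG r) (D2 s u2 r)"
      unfolding M_def using L by (simp add: D2_add D2_smult LD_smult g2_def add.assoc)
  qed
  define Q where "Q = charQ s fF gG \<theta>"
  have Qf: "Q = (\<lambda>q. cscale (fF q) (T1 q) + cscale (gG q) (T2 q))"
    by (rule ext) (simp add: Q_def charQ_def T1_def T2_def)
  have dQ1: "\<And>r. r \<in> U \<Longrightarrow> D1 s Q r = cscale (f1 r) (T1 r) + cscale (fF r) (D1 s T1 r) + cscale (gG r) (D2 s T1 r)"
  proof -
    fix r assume r: "r \<in> U"
    note L = LDT[OF r] co[OF r]
    show "D1 s Q r = cscale (f1 r) (T1 r) + cscale (fF r) (D1 s T1 r) + cscale (gG r) (D2 s T1 r)"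
      unfolding Qf using L sw0[OF r] by (simp add: D1_add D1_smult LD_smult f1_def)
  qed
  have dQ2: "\<And>r. r \<in> U \<Longrightarrow> D2 s Q r = cscale (fF r) (D2 s T1 r) + cscale (g2 r) (T2 r) + cscale (gG r) (D2 s T2 r)"
  proof -
    fix r assume r: "r \<in> U"
    note L = LDT[OF r] co[OF r]
    show "D2 s Q r = cscale (fF r) (D2 s T1 r) + cscale (g2 r) (T2 r) + cscale (gG r) (D2 s T2 r)"
      unfolding Qf using L by (simp add: D2_add D2_smult LD_smult g2_def add.assoc)
  qed
  have core1: "\<And>r. r \<in> U \<Longrightarrow> A1 r = D1 s M r + comm (M r) (u1 r)"
  proof -
    fix r assume r: "r \<in> U"
    have "A1 r = cscale c1 (comm (D1 s Q r) (\<theta> r) + comm (T1 r) (Q r))"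
      by (simp add: A1_def prw_u1_def c1_def Q_def T1_def)
    also have "\<dots> = cscale c1 (comm (cscale (f1 r) (T1 r) + cscale (fF r) (D1 s T1 r) + cscale (gG r) (D2 s T1 r)) (\<theta> r)
                   + comm (T1 r) (cscale (fF r) (T1 r) + cscale (gG r) (T2 r)))"
      unfolding dQ1[OF r] by (simp add: Qf)
    also have "\<dots> = cscale (f1 r) (u1 r) + cscale (fF r) (cscale c1 (comm (D1 s T1 r) (\<theta> r) + comm (T1 r) (T1 r)))
       + cscale (gG r) (cscale c1 (comm (D2 s T1 r) (\<theta> r) + comm (T1 r) (T2 r)) + comm (u1 r) (u2 r))
       + comm (cscale (fF r) (u1 r) + cscale (gG r) (u2 r)) (u1 r)"
      by (rule alg_core1) (simp add: u1f)
    also have "\<dots> = D1 s M r + comm (M r) (u1 r)"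
    proof -
      have "D1 s u2 r = D2 s u1 r + comm (u1 r) (u2 r)" by (rule zc_aux1[OF ZC[OF r]])
      thus ?thesis using dM1[OF r] d11[OF r] d21[OF r] by (simp add: M_def)
    qed
    finally show "A1 r = D1 s M r + comm (M r) (u1 r)" .
  qed
  have core2: "\<And>r. r \<in> U \<Longrightarrow> A2 r = D2 s M r + comm (M r) (u2 r)"
  proof -
    fix r assume r: "r \<in> U"
    have "A2 r = cscale c2 (comm (D2 s Q r) (\<theta> r) + comm (T2 r) (Q r))"
      by (simp add: A2_def prw_u2_def c2_def Q_def T2_def)
    also have "\<dots> = cscale c2 (comm (cscale (fF r) (D2 s T1 r) + cscale (g2 r) (T2 r) + cscale (gG r) (D2 s T2 r)) (\<theta> r)
                   + comm (T2 r) (cscale (fF r) (T1 r) + cscale (gG r) (T2 r)))"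
      unfolding dQ2[OF r] by (simp add: Qf)
    also have "\<dots> = cscale (fF r) (cscale c2 (comm (D2 s T1 r) (\<theta> r) + comm (T2 r) (T1 r)) - comm (u1 r) (u2 r))
       + cscale (g2 r) (u2 r) + cscale (gG r) (cscale c2 (comm (D2 s T2 r) (\<theta> r) + comm (T2 r) (T2 r)))
       + comm (cscale (fF r) (u1 r) + cscale (gG r) (u2 r)) (u2 r)"
      by (rule alg_core2) (simp add: u2f)
    also have "\<dots> = D2 s M r + comm (M r) (u2 r)"
    proof -
      have "D2 s u1 r = D1 s u2 r - comm (u1 r) (u2 r)" by (rule zc_aux2[OF ZC[OF r]])
      thus ?thesis using dM2[OF r] d12[OF r] d22[OF r] sw0[OF r] by (simp add: M_def)
    qed
    finally show "A2 r = D2 s M r + comm (M r) (u2 r)" .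
  qed
  have invP: "\<And>r. r \<in> U \<Longrightarrow> matrix_inv (\<Phi> r) = cadj (\<Phi> r)" using cPP inv_eq_cadj by blast
  have LDcP: "\<And>r. r \<in> U \<Longrightarrow> LD (\<lambda>q. cadj (\<Phi> q)) r" using LD_cadj LD\<Phi> by blast
  have l1: "\<And>q. q \<in> U \<Longrightarrow> D1 s \<Phi> q = u1 q ** \<Phi> q" using lsp u1_def by blast
  have l2: "\<And>q. q \<in> U \<Longrightarrow> D2 s \<Phi> q = u2 q ** \<Phi> q" using lsp u2_def by blast
  have dcP1: "\<And>r. r \<in> U \<Longrightarrow> D1 s (\<lambda>q. cadj (\<Phi> q)) r = - (cadj (\<Phi> r) ** u1 r)"
  proof -
    fix r assume r: "r \<in> U"
    define X where "X = D1 s (\<lambda>q. cadj (\<Phi> q)) r"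
    have "D1 s (\<lambda>q. cadj (\<Phi> q) ** \<Phi> q) r = D1 s (\<lambda>q. mat 1) r"
      by (rule D1_local[OF U r]) (simp add: cPP)
    hence e: "X ** \<Phi> r + cadj (\<Phi> r) ** (u1 r ** \<Phi> r) = 0"
      using D1_mult[OF LDcP[OF r] LD\<Phi>[OF r], of s] l1[OF r] by (simp add: D1_const X_def)
    have "X = (X ** \<Phi> r) ** cadj (\<Phi> r)" using PcP[OF r] by (simp add: matrix_mul_assoc[symmetric])
    also have "X ** \<Phi> r = - (cadj (\<Phi> r) ** (u1 r ** \<Phi> r))" using e by (simp add: eq_neg_iff_add_eq_0)
    finally show "D1 s (\<lambda>q. cadj (\<Phi> q)) r = - (cadj (\<Phi> r) ** u1 r)"
      using PcP[OF r] unfolding X_def by (simp add: matrix_neg_left matrix_mul_assoc[symmetric])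
  qed
  have dcP2: "\<And>r. r \<in> U \<Longrightarrow> D2 s (\<lambda>q. cadj (\<Phi> q)) r = - (cadj (\<Phi> r) ** u2 r)"
  proof -
    fix r assume r: "r \<in> U"
    define X where "X = D2 s (\<lambda>q. cadj (\<Phi> q)) r"
    have "D2 s (\<lambda>q. cadj (\<Phi> q) ** \<Phi> q) r = D2 s (\<lambda>q. mat 1) r"
      by (rule D2_local[OF U r]) (simp add: cPP)
    hence e: "X ** \<Phi> r + cadj (\<Phi> r) ** (u2 r ** \<Phi> r) = 0"
      using D2_mult[OF LDcP[OF r] LD\<Phi>[OF r], of s] l2[OF r] by (simp add: D2_const X_def)
    have "X = (X ** \<Phi> r) ** cadj (\<Phi> r)" using PcP[OF r] by (simp add: matrix_mul_assoc[symmetric])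
    also have "X ** \<Phi> r = - (cadj (\<Phi> r) ** (u2 r ** \<Phi> r))" using e by (simp add: eq_neg_iff_add_eq_0)
    finally show "D2 s (\<lambda>q. cadj (\<Phi> q)) r = - (cadj (\<Phi> r) ** u2 r)"
      using PcP[OF r] unfolding X_def by (simp add: matrix_neg_left matrix_mul_assoc[symmetric])
  qed
  define F where "F = (\<lambda>p. matrix_inv (\<Phi> p) ** M p ** \<Phi> p)"
  define \<Psi> where "\<Psi> = (\<lambda>p. M p ** \<Phi> p)"
  have dF1: "\<And>r. r \<in> U \<Longrightarrow> D1 s F r = matrix_inv (\<Phi> r) ** A1 r ** \<Phi> r"
  proof -
    fix r assume r: "r \<in> U"
    have "D1 s F r = D1 s (\<lambda>q. cadj (\<Phi> q) ** M q ** \<Phi> q) r"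
      by (rule D1_local[OF U r]) (simp add: F_def invP)
    also have "\<dots> = (D1 s (\<lambda>q. cadj (\<Phi> q)) r ** M r + cadj (\<Phi> r) ** D1 s M r) ** \<Phi> r + (cadj (\<Phi> r) ** M r) ** (u1 r ** \<Phi> r)"
      using D1_mult[OF LD_mult[OF LDcP[OF r] LDM[OF r]] LD\<Phi>[OF r], of s] D1_mult[OF LDcP[OF r] LDM[OF r], of s] l1[OF r]
      by simp
    also have "\<dots> = cadj (\<Phi> r) ** (D1 s M r + comm (M r) (u1 r)) ** \<Phi> r"
      by (rule alg_DF[OF dcP1[OF r]])
    finally show "D1 s F r = matrix_inv (\<Phi> r) ** A1 r ** \<Phi> r" using core1[OF r] invP[OF r] by simp
  qed
  have dF2: "\<And>r. r \<in> U \<Longrightarrow> D2 s F r = matrix_inv (\<Phi> r) ** A2 r ** \<Phi> r"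
  proof -
    fix r assume r: "r \<in> U"
    have "D2 s F r = D2 s (\<lambda>q. cadj (\<Phi> q) ** M q ** \<Phi> q) r"
      by (rule D2_local[OF U r]) (simp add: F_def invP)
    also have "\<dots> = (D2 s (\<lambda>q. cadj (\<Phi> q)) r ** M r + cadj (\<Phi> r) ** D2 s M r) ** \<Phi> r + (cadj (\<Phi> r) ** M r) ** (u2 r ** \<Phi> r)"
      using D2_mult[OF LD_mult[OF LDcP[OF r] LDM[OF r]] LD\<Phi>[OF r], of s] D2_mult[OF LDcP[OF r] LDM[OF r], of s] l2[OF r]
      by simp
    also have "\<dots> = cadj (\<Phi> r) ** (D2 s M r + comm (M r) (u2 r)) ** \<Phi> r"
      by (rule alg_DF[OF dcP2[OF r]])
    finally show "D2 s F r = matrix_inv (\<Phi> r) ** A2 r ** \<Phi> r" using core2[OF r] invP[OF r] by simp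
  qed
  have dPsi1: "\<And>r. r \<in> U \<Longrightarrow> D1 s \<Psi> r = u1 r ** \<Psi> r + A1 r ** \<Phi> r"
  proof -
    fix r assume r: "r \<in> U"
    have "D1 s \<Psi> r = D1 s M r ** \<Phi> r + M r ** (u1 r ** \<Phi> r)"
      unfolding \<Psi>_def using D1_mult[OF LDM[OF r] LD\<Phi>[OF r], of s] l1[OF r] by simp
    thus "D1 s \<Psi> r = u1 r ** \<Psi> r + A1 r ** \<Phi> r" unfolding core1[OF r] \<Psi>_def alg_DPsi .
  qed
  have dPsi2: "\<And>r. r \<in> U \<Longrightarrow> D2 s \<Psi> r = u2 r ** \<Psi> r + A2 r ** \<Phi> r"
  proof -
    fix r assume r: "r \<in> U"
    have "D2 s \<Psi> r = D2 s M r ** \<Phi> r + M r ** (u2 r ** \<Phi> r)"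
      unfolding \<Psi>_def using D2_mult[OF LDM[OF r] LD\<Phi>[OF r], of s] l2[OF r] by simp
    thus "D2 s \<Psi> r = u2 r ** \<Psi> r + A2 r ** \<Phi> r" unfolding core2[OF r] \<Psi>_def alg_DPsi .
  qed
  have PsiF: "\<And>r. r \<in> U \<Longrightarrow> \<Psi> r = \<Phi> r ** F r"
    unfolding \<Psi>_def F_def using invP PcP by (simp add: matrix_mul_assoc)
  have suM: "\<And>r. r \<in> U \<Longrightarrow> in_su (M r)"
  proof -
    fix r assume r: "r \<in> U"
    have tr: "trace (M r) = 0" unfolding M_def u1f u2f
      by (simp add: trace_add trace_cscale trace_comm)
    have "cadj (M r) = - M r"
    proof (cases s)
      case Minkowski
      then have "in_su (u1 r)" "in_su (u2 r)" using real r unfolding setting_reality_def u1_def u2_def by auto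
      then show ?thesis using co[OF r] Minkowski unfolding M_def in_su_def
        by (simp add: cadj_add cadj_cscale cscale_minus_right)
    next
      case Euclidean
      then have a: "cadj (u1 r) = - u2 r" using real r unfolding setting_reality_def u1_def u2_def by auto
      then have b: "cadj (u2 r) = - u1 r" by (metis cadj_cadj cadj_minus minus_minus)
      show ?thesis using co[OF r] Euclidean a b unfolding M_def
        by (simp add: cadj_add cadj_cscale cscale_minus_right)
    qed
    thus "in_su (M r)" using tr unfolding in_su_def by simp
  qed
  have suF: "\<And>r. r \<in> U \<Longrightarrow> in_su (F r)"
    unfolding F_def using invP su_conj[OF cPP suM] by simp
  have e11: "\<And>q. q \<in> U \<Longrightarrow> D1 s u1 q = cscale c1 (comm (D1 s T1 q) (\<theta> q))" using d11 by simp
  have e21: "\<And>q. q \<in> U \<Longrightarrow> D2 s u1 q = cscale c1 (comm (D2 s T1 q) (\<theta> q) + comm (T1 q) (T2 q))" using d21 by simp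
  have e12: "\<And>q. q \<in> U \<Longrightarrow> D1 s u2 q = cscale c2 (comm (D2 s T1 q) (\<theta> q) + comm (T2 q) (T1 q))" using d12 sw0 by simp
  have e22: "\<And>q. q \<in> U \<Longrightarrow> D2 s u2 q = cscale c2 (comm (D2 s T2 q) (\<theta> q))" using d22 by simp
  have LDd: "\<And>r. r \<in> U \<Longrightarrow> LD (D1 s u1) r \<and> LD (D2 s u1) r \<and> LD (D1 s u2) r \<and> LD (D2 s u2) r"
  proof -
    fix r assume r: "r \<in> U"
    note L = LDT[OF r] LD\<theta>[OF r]
    have a: "LD (\<lambda>q. cscale c1 (comm (D1 s T1 q) (\<theta> q))) r"
      using L by (intro LD_cscale LD_comm) auto
    have b: "LD (\<lambda>q. cscale c1 (comm (D2 s T1 q) (\<theta> q) + comm (T1 q) (T2 q))) r"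
      using L by (intro LD_cscale LD_add LD_comm) auto
    have c: "LD (\<lambda>q. cscale c2 (comm (D2 s T1 q) (\<theta> q) + comm (T2 q) (T1 q))) r"
      using L by (intro LD_cscale LD_add LD_comm) auto
    have d: "LD (\<lambda>q. cscale c2 (comm (D2 s T2 q) (\<theta> q))) r"
      using L by (intro LD_cscale LD_comm) auto
    show "LD (D1 s u1) r \<and> LD (D2 s u1) r \<and> LD (D1 s u2) r \<and> LD (D2 s u2) r"
      using LD_local[OF U r _ a, of "D1 s u1"] LD_local[OF U r _ b, of "D2 s u1"]
        LD_local[OF U r _ c, of "D1 s u2"] LD_local[OF U r _ d, of "D2 s u2"] e11 e21 e12 e22 by auto
  qed
  have symu1: "\<And>r. r \<in> U \<Longrightarrow> D2 s (D1 s u1) r = D1 s (D2 s u1) r"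
  proof -
    fix r assume r: "r \<in> U"
    note L = LDT[OF r] LD\<theta>[OF r]
    have "D2 s (D1 s u1) r = D2 s (\<lambda>q. cscale c1 (comm (D1 s T1 q) (\<theta> q))) r"
      by (rule D2_local[OF U r e11])
    also have "\<dots> = cscale c1 (comm (D2 s (D1 s T1) r) (\<theta> r) + comm (D1 s T1 r) (T2 r))"
      using L by (simp add: D2_cscale D2_comm LD_comm T2r)
    finally have 1: "D2 s (D1 s u1) r = cscale c1 (comm (D2 s (D1 s T1) r) (\<theta> r) + comm (D1 s T1 r) (T2 r))" .
    have "D1 s (D2 s u1) r = D1 s (\<lambda>q. cscale c1 (comm (D2 s T1 q) (\<theta> q) + comm (T1 q) (T2 q))) r"
      by (rule D1_local[OF U r e21])
    also have "\<dots> = cscale c1 (comm (D1 s (D2 s T1) r) (\<theta> r) + comm (D2 s T1 r) (T1 r) + (comm (D1 s T1 r) (T2 r) + comm (T1 r) (D1 s T2 r)))"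
      using L by (simp add: D1_cscale D1_comm D1_add LD_comm LD_add T1r)
    finally have 2: "D1 s (D2 s u1) r = cscale c1 (comm (D1 s (D2 s T1) r) (\<theta> r) + comm (D2 s T1 r) (T1 r) + (comm (D1 s T1 r) (T2 r) + comm (T1 r) (D1 s T2 r)))" .
    show "D2 s (D1 s u1) r = D1 s (D2 s u1) r" unfolding 1 2 sw1[OF r] sw0[OF r, symmetric]
      using comm_anti[of "T1 r" "D2 s T1 r"] by (simp add: algebra_simps)
  qed
  have symu2: "\<And>r. r \<in> U \<Longrightarrow> D2 s (D1 s u2) r = D1 s (D2 s u2) r"
  proof -
    fix r assume r: "r \<in> U"
    note L = LDT[OF r] LD\<theta>[OF r]
    have "D2 s (D1 s u2) r = D2 s (\<lambda>q. cscale c2 (comm (D2 s T1 q) (\<theta> q) + comm (T2 q) (T1 q))) r"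
      by (rule D2_local[OF U r e12])
    also have "\<dots> = cscale c2 (comm (D2 s (D2 s T1) r) (\<theta> r) + comm (D2 s T1 r) (T2 r) + (comm (D2 s T2 r) (T1 r) + comm (T2 r) (D2 s T1 r)))"
      using L by (simp add: D2_cscale D2_comm D2_add LD_comm LD_add T2r)
    finally have 1: "D2 s (D1 s u2) r = cscale c2 (comm (D2 s (D2 s T1) r) (\<theta> r) + comm (D2 s T1 r) (T2 r) + (comm (D2 s T2 r) (T1 r) + comm (T2 r) (D2 s T1 r)))" .
    have "D1 s (D2 s u2) r = D1 s (\<lambda>q. cscale c2 (comm (D2 s T2 q) (\<theta> q))) r"
      by (rule D1_local[OF U r e22])
    also have "\<dots> = cscale c2 (comm (D1 s (D2 s T2) r) (\<theta> r) + comm (D2 s T2 r) (T1 r))"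
      using L by (simp add: D1_cscale D1_comm LD_comm T1r)
    finally have 2: "D1 s (D2 s u2) r = cscale c2 (comm (D1 s (D2 s T2) r) (\<theta> r) + comm (D2 s T2 r) (T1 r))" .
    have 3: "D2 s (D2 s T1) r = D1 s (D2 s T2) r"
      using D2_local[OF U r sw0] sw2[OF r] by simp
    show "D2 s (D1 s u2) r = D1 s (D2 s u2) r" unfolding 1 2 3
      using comm_anti[of "T2 r" "D2 s T1 r"] by (simp add: algebra_simps)
  qed
  have eM1: "\<And>q. q \<in> U \<Longrightarrow> D1 s M q = cscale (f1 q) (u1 q) + cscale (fF q) (D1 s u1 q) + cscale (gG q) (D1 s u2 q)"
    by (rule dM1)
  have eM2: "\<And>q. q \<in> U \<Longrightarrow> D2 s M q = cscale (fF q) (D2 s u1 q) + cscale (g2 q) (u2 q) + cscale (gG q) (D2 s u2 q)"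
    by (rule dM2)
  have LDM12: "\<And>r. r \<in> U \<Longrightarrow> LD (D1 s M) r \<and> LD (D2 s M) r"
  proof -
    fix r assume r: "r \<in> U"
    note L = LDu[OF r] co[OF r] LDd[OF r]
    have a: "LD (\<lambda>q. cscale (f1 q) (u1 q) + cscale (fF q) (D1 s u1 q) + cscale (gG q) (D1 s u2 q)) r"
      using L by (intro LD_add LD_smult) auto
    have b: "LD (\<lambda>q. cscale (fF q) (D2 s u1 q) + cscale (g2 q) (u2 q) + cscale (gG q) (D2 s u2 q)) r"
      using L by (intro LD_add LD_smult) auto
    show "LD (D1 s M) r \<and> LD (D2 s M) r"
      using LD_local[OF U r _ a, of "D1 s M"] LD_local[OF U r _ b, of "D2 s M"] eM1 eM2 by auto
  qed
  have symM: "\<And>r. r \<in> U \<Longrightarrow> D2 s (D1 s M) r = D1 s (D2 s M) r"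
  proof -
    fix r assume r: "r \<in> U"
    note L = LDu[OF r] co[OF r] LDd[OF r]
    have "D2 s (D1 s M) r = D2 s (\<lambda>q. cscale (f1 q) (u1 q) + cscale (fF q) (D1 s u1 q) + cscale (gG q) (D1 s u2 q)) r"
      by (rule D2_local[OF U r eM1])
    also have "\<dots> = cscale (f1 r) (D2 s u1 r) + cscale (fF r) (D2 s (D1 s u1) r) + (cscale (g2 r) (D1 s u2 r) + cscale (gG r) (D2 s (D1 s u2) r))"
      using L by (simp add: D2_add D2_smult LD_add LD_smult g2_def)
    finally have 1: "D2 s (D1 s M) r = cscale (f1 r) (D2 s u1 r) + cscale (fF r) (D2 s (D1 s u1) r) + (cscale (g2 r) (D1 s u2 r) + cscale (gG r) (D2 s (D1 s u2) r))" .
    have "D1 s (D2 s M) r = D1 s (\<lambda>q. cscale (fF q) (D2 s u1 q) + cscale (g2 q) (u2 q) + cscale (gG q) (D2 s u2 q)) r"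
      by (rule D1_local[OF U r eM2])
    also have "\<dots> = cscale (f1 r) (D2 s u1 r) + cscale (fF r) (D1 s (D2 s u1) r) + cscale (g2 r) (D1 s u2 r) + cscale (gG r) (D1 s (D2 s u2) r)"
      using L by (simp add: D1_add D1_smult LD_add LD_smult f1_def)
    finally have 2: "D1 s (D2 s M) r = cscale (f1 r) (D2 s u1 r) + cscale (fF r) (D1 s (D2 s u1) r) + cscale (g2 r) (D1 s u2 r) + cscale (gG r) (D1 s (D2 s u2) r)" .
    show "D2 s (D1 s M) r = D1 s (D2 s M) r" unfolding 1 2 symu1[OF r] symu2[OF r] by (simp add: add.assoc)
  qed
  have fin: "\<And>r. r \<in> U \<Longrightarrow> D2 s A1 r - D1 s A2 r + comm (A1 r) (u2 r) + comm (u1 r) (A2 r) = 0"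
  proof -
    fix r assume r: "r \<in> U"
    note L = LDu[OF r] LDM[OF r] LDM12[OF r] LDd[OF r]
    have "D2 s A1 r = D2 s (\<lambda>q. D1 s M q + comm (M q) (u1 q)) r"
      by (rule D2_local[OF U r core1])
    also have "\<dots> = D2 s (D1 s M) r + (comm (D2 s M r) (u1 r) + comm (M r) (D2 s u1 r))"
      using L by (simp add: D2_add D2_comm LD_comm)
    finally have 1: "D2 s A1 r = D1 s (D2 s M) r + (comm (D2 s M r) (u1 r) + comm (M r) (D2 s u1 r))"
      using symM[OF r] by simp
    have "D1 s A2 r = D1 s (\<lambda>q. D2 s M q + comm (M q) (u2 q)) r"
      by (rule D1_local[OF U r core2])
    also have "\<dots> = D1 s (D2 s M) r + (comm (D1 s M r) (u2 r) + comm (M r) (D1 s u2 r))"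
      using L by (simp add: D1_add D1_comm LD_comm)
    finally have 2: "D1 s A2 r = D1 s (D2 s M) r + (comm (D1 s M r) (u2 r) + comm (M r) (D2 s u1 r + comm (u1 r) (u2 r)))"
      using zc_aux1[OF ZC[OF r]] by simp
    show "D2 s A1 r - D1 s A2 r + comm (A1 r) (u2 r) + comm (u1 r) (A2 r) = 0"
      unfolding 1 2 core1[OF r] core2[OF r] by (rule alg_final)
  qed
  have invPsi: "\<And>r. r \<in> U \<Longrightarrow> matrix_inv (\<Phi> r) ** \<Psi> r = F r"
    unfolding F_def \<Psi>_def by (simp add: matrix_mul_assoc)
  have G1: "\<forall>p\<in>U. in_su (F p) \<and> D1 s F p = matrix_inv (\<Phi> p) ** A1 p ** \<Phi> p
                 \<and> D2 s F p = matrix_inv (\<Phi> p) ** A2 p ** \<Phi> p \<and> \<Psi> p = \<Phi> p ** F p"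
    using suF dF1 dF2 PsiF by blast
  have G2: "LSP_symmetry s U u1 u2 \<Phi> A1 A2 \<Psi>"
    unfolding LSP_symmetry_def using fin invPsi suF dPsi1 dPsi2 by simp
  show ?thesis
    using G1 G2 unfolding F_def \<Psi>_def M_def Let_def u1_def[symmetric] u2_def[symmetric] A1_def[symmetric] A2_def[symmetric]
    by blast
qed

end
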